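(* There exist universal constants $c,c'>0$ such that the following holds. Let $n\in\mathbb{N}$, $\sigma^2>0$, $0<\tau_1\le\dots\le\tau_n$, $L,\Delta>0$ and $0<\varepsilon\le c'L\Delta$. Let $A=\{A_d\}_{d\in\mathbb{N}}$ be a family of zero-respecting algorithms for the time multiple oracles protocol ($A_d$ acting on $\mathbb{R}^d$). Then there exist $d\in\mathbb{N}$, a function $f\in\mathcal{F}_{\Delta,L}$ on $\mathbb{R}^d$, and an admissible choice of oracles and distributions $((O_1,\dots,O_n),(\mathcal{D}_1,\dots,\mathcal{D}_n))$ from the oracle class $\mathcal{O}^{\sigma^2}_{\tau_1,\dots,\tau_n}(f)$ such that, when $A_d$ is run in the time multiple oracles protocol with these oracles, $$\mathbb{E}\Big[\inf_{k\in S_t}\|\nabla f(x^k)\|^2\Big]>\varepsilon\quad\text{for}\quad t=c\cdot\min_{m\in[n]}\left[\Big(\frac1m\sum_{i=1}^m\frac1{\tau_i}\Big)^{-1}\Big(\frac{L\Delta}{\varepsilon}+\frac{\sigma^2L\Delta}{m\varepsilon^2}\Big)\right].$$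
   Context: Notation: $[n]=\{1,\dots,n\}$, $\mathbb{N}_0=\{0,1,2,\dots\}$; for $x\in\mathbb{R}^d$, $\mathrm{supp}(x)=\{i\in[d]: x_i\neq0\}$. Time multiple oracles protocol. There are $n$ oracles $O_1,\dots,O_n$ with distributions $\mathcal{D}_1,\dots,\mathcal{D}_n$ on a sample space $\mathbb{S}_\xi$. An algorithm is a sequence $A=\{A^k\}_{k\ge0}$ with $A^0\in\mathbb{R}_{\ge0}\times[n]\times\mathbb{R}^d$ and $A^k:(\mathbb{R}^d)^k\to\mathbb{R}_{\ge0}\times[n]\times\mathbb{R}^d$ for $k\ge1$, such that for all $k\ge1$ and all $g^1,\dots,g^k$ the first (time) component of $A^k(g^1,\dots,g^k)$ is at least the first component of $A^{k-1}(g^1,\dots,g^{k-1})$. Each oracle $i$ has a state in $\mathbb{R}_{\ge0}\times\mathbb{R}^d\times\{0,1\}$, initially $s_i^0=(0,0,0)$. Set $t^0=0$. For $k=0,1,2,\dots$: $(t^{k+1},i^{k+1},x^k)=A^k(g^1,\dots,g^k)$ ($=A^0$ for $k=0$); draw $\xi^{k+1}\sim\mathcal{D}_{i^{k+1}}$ independently of everything before; $(s^{k+1}_{i^{k+1}},g^{k+1})=O_{i^{k+1}}(t^{k+1},x^k,s^k_{i^{k+1}},\xi^{k+1})$, and $s^{k+1}_j=s^k_j$ for $j\ne i^{k+1}$. For $t\ge0$, $S_t=\{k\in\mathbb{N}_0: t^k\le t\}$. Delayed oracle. For $\tau>0$ and a mapping $G:\mathbb{R}^d\times\mathbb{S}_\xi\to\mathbb{R}^d$,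 the oracle $O^G_\tau(t,x,(s_t,s_x,s_q),\xi)$ returns $((t,x,1),0)$ if $s_q=0$; $((s_t,s_x,1),0)$ if $s_q=1$ and $t<s_t+\tau$; $((0,0,0),G(s_x;\xi))$ if $s_q=1$ and $t\ge s_t+\tau$. Zero-respecting: an algorithm is zero-respecting if $\mathrm{supp}(x^k)\subseteq\bigcup_{j=1}^k\mathrm{supp}(g^j)$ for all $k\in\mathbb{N}_0$ and all realizations (so $x^0=0$). Function class $\mathcal{F}_{\Delta,L}$: differentiable $f:\mathbb{R}^d\to\mathbb{R}$ with $\|\nabla f(x)-\nabla f(y)\|\le L\|x-y\|$ for all $x,y$ and $f(0)-\inf_x f(x)\le\Delta$. Oracle class $\mathcal{O}^{\sigma^2}_{\tau_1,\dots,\tau_n}(f)$: an admissible choice consists of a sample space $\mathbb{S}_\xi$, distributions $\mathcal{D}_1,\dots,\mathcal{D}_n$ on it, and a single mapping $G:\mathbb{R}^d\times\mathbb{S}_\xi\to\mathbb{R}^d$ such that for all $x$ and all $i$, $\mathbb{E}_{\xi\sim\mathcal{D}_i}[G(x;\xi)]=\nabla f(x)$ and $\mathbb{E}_{\xi\sim\mathcal{D}_i}\|G(x;\xi)-\nabla f(x)\|^2\le\sigma^2$; the oracles are $O_i=O^G_{\tau_i}$. *)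

theory Defs
  imports "HOL-Probability.Probability"
begin

text \<open>Points of R^d are represented as functions nat => real vanishing at all
  coordinates >= d (coordinates are indexed 0..d-1).\<close>

type_synonym vecn = "nat \<Rightarrow> real"

definition vecd :: "nat \<Rightarrow> vecn set" where
  "vecd d = {x. \<forall>j\<ge>d. x j = 0}"

definition normd :: "nat \<Rightarrow> vecn \<Rightarrow> real" where
  "normd d x = sqrt (\<Sum>j<d. (x j)^2)"

definition has_grad :: "nat \<Rightarrow> (vecn \<Rightarrow> real) \<Rightarrow> vecn \<Rightarrow> vecn \<Rightarrow> bool" where
  "has_grad d f g x \<longleftrightarrow>
     (\<forall>e>0. \<exists>\<delta>>0. \<forall>h\<in>vecd d. normd d h < \<delta> \<longrightarrow>
        \<bar>f (\<lambda>j. x j + h j) - f x - (\<Sum>j<d. g j * h j)\<bar> \<le> e * normd d h)"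

definition in_FDL :: "nat \<Rightarrow> real \<Rightarrow> real \<Rightarrow> (vecn \<Rightarrow> real) \<Rightarrow> (vecn \<Rightarrow> vecn) \<Rightarrow> bool" where
  "in_FDL d Delta L f gf \<longleftrightarrow>
     (\<forall>x\<in>vecd d. gf x \<in> vecd d \<and> has_grad d f (gf x) x) \<and>
     (\<forall>x\<in>vecd d. \<forall>y\<in>vecd d. normd d (\<lambda>j. gf x j - gf y j) \<le> L * normd d (\<lambda>j. x j - y j)) \<and>
     (\<forall>x\<in>vecd d. f (\<lambda>_. 0) - f x \<le> Delta)"

text \<open>An algorithm: A gs = A^k(g^1,...,g^k) for gs = [g^1,...,g^k]; result (time, oracle index, point).\<close>
type_synonym algo = "vecn list \<Rightarrow> real \<times> nat \<times> vecn"

definition is_algorithm :: "nat \<Rightarrow> nat \<Rightarrow> algo \<Rightarrow> bool" where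
  "is_algorithm n d A \<longleftrightarrow>
     (\<forall>gs. set gs \<subseteq> vecd d \<longrightarrow>
        fst (A gs) \<ge> 0 \<and> fst (snd (A gs)) \<in> {1..n} \<and> snd (snd (A gs)) \<in> vecd d) \<and>
     (\<forall>gs g. set gs \<subseteq> vecd d \<longrightarrow> g \<in> vecd d \<longrightarrow> fst (A (gs @ [g])) \<ge> fst (A gs))"

definition zero_respecting :: "nat \<Rightarrow> algo \<Rightarrow> bool" where
  "zero_respecting d A \<longleftrightarrow>
     (\<forall>gs. set gs \<subseteq> vecd d \<longrightarrow>
        (\<forall>j. snd (snd (A gs)) j \<noteq> 0 \<longrightarrow> (\<exists>g\<in>set gs. g j \<noteq> 0)))"

text \<open>Oracle state (s_t, s_x, s_q), with s_q in {0,1} encoded as bool.\<close>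
type_synonym ostate = "real \<times> vecn \<times> bool"

definition delayed_oracle ::
  "real \<Rightarrow> (vecn \<Rightarrow> real \<Rightarrow> vecn) \<Rightarrow> real \<Rightarrow> vecn \<Rightarrow> ostate \<Rightarrow> real \<Rightarrow> ostate \<times> vecn" where
  "delayed_oracle tau G t x s xi =
     (case s of (st, sx, sq) \<Rightarrow>
        if \<not> sq then ((t, x, True), (\<lambda>_. 0))
        else if t < st + tau then ((st, sx, True), (\<lambda>_. 0))
        else ((0, (\<lambda>_. 0), False), G sx xi))"

text \<open>The randomness omega (i,k) is an independent array of
  samples with omega (i,k) ~ D_i; at step k+1 the sample xi^{k+1} = omega (i^{k+1}, k+1)
  is used (a coupling which yields exactly the law of the protocol).\<close>
fun protocol_run ::
  "algo \<Rightarrow> (nat \<Rightarrow> real) \<Rightarrow> (vecn \<Rightarrow> real \<Rightarrow> vecn) \<Rightarrow> (nat \<times> nat \<Rightarrow> real) \<Rightarrow> nat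
     \<Rightarrow> vecn list \<times> (nat \<Rightarrow> ostate)" where
  "protocol_run A tau G \<omega> 0 = ([], (\<lambda>i. (0, (\<lambda>_. 0), False)))"
| "protocol_run A tau G \<omega> (Suc k) =
     (case protocol_run A tau G \<omega> k of (gs, s) \<Rightarrow>
       (case A gs of (t, i, x) \<Rightarrow>
         (case delayed_oracle (tau i) G t x (s i) (\<omega> (i, Suc k)) of (s', g) \<Rightarrow>
            (gs @ [g], s(i := s')))))"

definition grads where
  "grads A tau G \<omega> k = fst (protocol_run A tau G \<omega> k)"

definition proto_time :: "algo \<Rightarrow> (nat \<Rightarrow> real) \<Rightarrow> (vecn \<Rightarrow> real \<Rightarrow> vecn) \<Rightarrow> (nat \<times> nat \<Rightarrow> real) \<Rightarrow> nat \<Rightarrow> real" where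
  "proto_time A tau G \<omega> k = (if k = 0 then 0 else fst (A (grads A tau G \<omega> (k - 1))))"

definition proto_point :: "algo \<Rightarrow> (nat \<Rightarrow> real) \<Rightarrow> (vecn \<Rightarrow> real \<Rightarrow> vecn) \<Rightarrow> (nat \<times> nat \<Rightarrow> real) \<Rightarrow> nat \<Rightarrow> vecn" where
  "proto_point A tau G \<omega> k = snd (snd (A (grads A tau G \<omega> k)))"

definition S_set where
  "S_set A tau G \<omega> t = {k. proto_time A tau G \<omega> k \<le> t}"

definition sample_measure :: "(nat \<Rightarrow> real measure) \<Rightarrow> (nat \<times> nat \<Rightarrow> real) measure" where
  "sample_measure D = PiM UNIV (\<lambda>p. D (fst p))"

text \<open>Admissible choice in O^{sigma^2}_{tau_1..tau_n}(f): distributions D_i (i in [n]) on the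
  sample space (here: real) and one mapping G : R^d x S -> R^d.\<close>
definition admissible_oracles ::
  "nat \<Rightarrow> nat \<Rightarrow> real \<Rightarrow> (vecn \<Rightarrow> vecn) \<Rightarrow> (nat \<Rightarrow> real measure) \<Rightarrow> (vecn \<Rightarrow> real \<Rightarrow> vecn) \<Rightarrow> bool" where
  "admissible_oracles n d sigma2 gf D G \<longleftrightarrow>
     (\<forall>i. prob_space (D i)) \<and>
     (\<forall>x\<in>vecd d. \<forall>xi. G x xi \<in> vecd d) \<and>
     (\<forall>x\<in>vecd d. \<forall>i\<in>{1..n}.
        (\<forall>j. integrable (D i) (\<lambda>xi. G x xi j) \<and> (\<integral>xi. G x xi j \<partial>D i) = gf x j) \<and>
        integrable (D i) (\<lambda>xi. (normd d (\<lambda>j. G x xi j - gf x j))^2) \<and>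
        (\<integral>xi. (normd d (\<lambda>j. G x xi j - gf x j))^2 \<partial>D i) \<le> sigma2)"

end

theory Submission
  imports Defs
begin


lemma glue_deriv:
  fixes f g h :: "real \<Rightarrow> real"
  assumes g: "(g has_real_derivative D) (at x)" and h: "(h has_real_derivative D) (at x)"
    and d: "d > 0" and fg: "\<And>y. x - d < y \<Longrightarrow> y \<le> x \<Longrightarrow> f y = g y"
    and fh: "\<And>y. x < y \<Longrightarrow> y < x + d \<Longrightarrow> f y = h y" and gh: "g x = h x"
  shows "(f has_real_derivative D) (at x)"
proof -
  have gl: "((\<lambda>y. (g y - g x) / (y - x)) \<longlongrightarrow> D) (at x)" using g by (simp add: has_field_derivative_iff)
  have hl: "((\<lambda>y. (h y - h x) / (y - x)) \<longlongrightarrow> D) (at x)" using h by (simp add: has_field_derivative_iff)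
  have fx: "f x = g x" "f x = h x" using fg[of x] gh d by auto
  have L: "((\<lambda>y. (f y - f x) / (y - x)) \<longlongrightarrow> D) (at_left x)"
  proof (rule Lim_transform_eventually[OF tendsto_mono[OF _ gl]])
    show "\<forall>\<^sub>F y in at_left x. (g y - g x) / (y - x) = (f y - f x) / (y - x)"
      using d fx fg by (auto simp: eventually_at_left_field intro!: exI[of _ "x - d"])
    show "at_left x \<le> at x" by (rule at_le) simp
  qed
  have R: "((\<lambda>y. (f y - f x) / (y - x)) \<longlongrightarrow> D) (at_right x)"
  proof (rule Lim_transform_eventually[OF tendsto_mono[OF _ hl]])
    show "\<forall>\<^sub>F y in at_right x. (h y - h x) / (y - x) = (f y - f x) / (y - x)"
      using d fx fh by (auto simp: eventually_at_right_field intro!: exI[of _ "x + d"])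
    show "at_right x \<le> at x" by (rule at_le) simp
  qed
  show ?thesis using L R by (simp add: has_field_derivative_iff filterlim_at_split)
qed

lemma local_deriv:
  fixes f g :: "real \<Rightarrow> real"
  assumes g: "(g has_real_derivative D) (at x)" and d: "a < x" "x < b"
    and fg: "\<And>y. a < y \<Longrightarrow> y < b \<Longrightarrow> f y = g y"
  shows "(f has_real_derivative D) (at x)"
proof -
  have "eventually (\<lambda>y. y \<in> {a<..<b}) (nhds x)"
    using d by (intro eventually_nhds_in_open) auto
  then have "eventually (\<lambda>y. f y = g y) (nhds x)" by (rule eventually_mono) (use fg in auto)
  then show ?thesis using g DERIV_cong_ev[of x x f g D D] by auto
qed

definition Psi0 :: "real \<Rightarrow> real" where
  "Psi0 y = (if y \<le> 0 then 0 else if y \<le> 1/2 then 2*y^2 else if y \<le> 1 then 1 - 2*(1-y)^2 else 1)"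
definition dPsi0 :: "real \<Rightarrow> real" where
  "dPsi0 y = (if y \<le> 0 then 0 else if y \<le> 1/2 then 4*y else if y \<le> 1 then 4*(1-y) else 0)"

lemma Psi0_deriv: "(Psi0 has_real_derivative dPsi0 x) (at x)"
proof -
  have q1: "((\<lambda>y. 2*y^2) has_real_derivative 4*x) (at x)" for x :: real
    by (auto intro!: derivative_eq_intros)
  have q2: "((\<lambda>y. 1 - 2*(1-y)^2) has_real_derivative 4*(1-x)) (at x)" for x :: real
    by (auto intro!: derivative_eq_intros)
  have c0: "((\<lambda>y. 0) has_real_derivative 0) (at x)" "((\<lambda>y. 1) has_real_derivative 0) (at x)" for x :: real
    by auto
  consider "x < 0" | "x = 0" | "0 < x" "x < 1/2" | "x = 1/2" | "1/2 < x" "x < 1" | "x = 1" | "x > 1"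
    by linarith
  then show ?thesis
  proof cases
    case 1
    then have e: "dPsi0 x = 0" by (simp add: dPsi0_def)
    show ?thesis unfolding e
      by (rule local_deriv[OF c0(1), of "x - 1" _ 0]) (use 1 in \<open>auto simp: Psi0_def\<close>)
  next
    case 2
    then have e: "dPsi0 x = 0" by (simp add: dPsi0_def)
    show ?thesis unfolding e
      by (rule glue_deriv[OF c0(1) _, where d="1/2" and h="\<lambda>y. 2*y^2"]) (use 2 q1[of 0] in \<open>auto simp: Psi0_def\<close>)
  next
    case 3
    then have e: "dPsi0 x = 4*x" by (simp add: dPsi0_def)
    show ?thesis unfolding e
      by (rule local_deriv[OF q1, of 0 _ "1/2"]) (use 3 in \<open>auto simp: Psi0_def\<close>)
  next
    case 4
    have e: "dPsi0 (1/2) = 2" by (simp add: dPsi0_def)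
    have q1': "((\<lambda>y. 2*y^2) has_real_derivative 2) (at (1/2))" using q1[of "1/2"] by simp
    have q2': "((\<lambda>y. 1 - 2*(1-y)^2) has_real_derivative 2) (at (1/2))" using q2[of "1/2"] by simp
    show ?thesis unfolding 4 e
      by (rule glue_deriv[OF q1' q2', where d="1/2"]) (auto simp: Psi0_def power2_eq_square)
  next
    case 5
    then have e: "dPsi0 x = 4*(1-x)" by (simp add: dPsi0_def)
    show ?thesis unfolding e
      by (rule local_deriv[OF q2, of "1/2" _ 1]) (use 5 in \<open>auto simp: Psi0_def\<close>)
  next
    case 6
    then have e: "dPsi0 x = 4*(1-x)" by (simp add: dPsi0_def)
    show ?thesis unfolding e
      by (rule glue_deriv[OF q2 _, where d="1/2" and h="\<lambda>y. 1"]) (use 6 c0(2)[of 1] in \<open>auto simp: Psi0_def\<close>)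
  next
    case 7
    then have e: "dPsi0 x = 0" by (simp add: dPsi0_def)
    show ?thesis unfolding e
      by (rule local_deriv[OF c0(2), of 1 _ "x+1"]) (use 7 in \<open>auto simp: Psi0_def\<close>)
  qed
qed

lemma Psi0_bounds: "0 \<le> Psi0 y" "Psi0 y \<le> 1"
proof -
  have a: "y \<le> 1/2 \<Longrightarrow> 0 < y \<Longrightarrow> 2*y^2 \<le> 1"
  proof -
    assume "y \<le> 1/2" "0 < y" then have "y^2 \<le> (1/2)^2" by (intro power_mono) auto
    then show ?thesis by (simp add: power2_eq_square)
  qed
  have b: "1/2 < y \<Longrightarrow> y \<le> 1 \<Longrightarrow> 2*(1-y)^2 \<le> 1"
  proof -
    assume "1/2 < y" "y \<le> 1" then have "(1-y)^2 \<le> (1/2)^2" by (intro power_mono) auto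
    then show ?thesis by (simp add: power2_eq_square)
  qed
  show "0 \<le> Psi0 y" "Psi0 y \<le> 1" using a b by (auto simp: Psi0_def)
qed

lemma dPsi0_bounds: "0 \<le> dPsi0 y" "dPsi0 y \<le> 2"
  by (auto simp: dPsi0_def)

lemma dPsi0_lip: "\<bar>dPsi0 x - dPsi0 y\<bar> \<le> 4 * \<bar>x - y\<bar>"
  by (auto simp: dPsi0_def abs_if)

lemma Psi0_1: "Psi0 1 = 1" by (simp add: Psi0_def)
lemma Psi0_0: "Psi0 0 = 0" "dPsi0 0 = 0" by (simp_all add: Psi0_def dPsi0_def)
lemma Psi0_neg: "y \<le> 0 \<Longrightarrow> Psi0 y = 0" by (simp add: Psi0_def)
lemma Psi0_ge1: "y \<ge> 1 \<Longrightarrow> Psi0 y = 1" by (simp add: Psi0_def)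
lemma dPsi0_mid: "1/4 < y \<Longrightarrow> y < 3/4 \<Longrightarrow> dPsi0 y \<ge> 1" by (auto simp: dPsi0_def)



definition nice :: "(real \<Rightarrow> real) \<Rightarrow> (real \<Rightarrow> real) \<Rightarrow> real \<Rightarrow> real \<Rightarrow> real \<Rightarrow> bool" where
  "nice f f' M D K \<longleftrightarrow> (\<forall>x. (f has_real_derivative f' x) (at x)) \<and> (\<forall>x. \<bar>f x\<bar> \<le> M) \<and>
     (\<forall>x. \<bar>f' x\<bar> \<le> D) \<and> (\<forall>x y. \<bar>f' x - f' y\<bar> \<le> K * \<bar>x - y\<bar>)"

lemma nice_mvt:
  assumes "nice f f' M D K"
  shows "\<exists>z. \<bar>z - a\<bar> \<le> \<bar>u\<bar> \<and> f (a + u) - f a = f' z * u"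
proof -
  have der: "\<And>x. (f has_real_derivative f' x) (at x)" using assms by (auto simp: nice_def)
  consider "u = 0" | "u > 0" | "u < 0" by linarith
  then show ?thesis
  proof cases
    case 1 then show ?thesis by (intro exI[of _ a]) auto
  next
    case 2
    from MVT2[of a "a+u" f f'] der 2 obtain z where "a < z" "z < a + u" "f (a+u) - f a = (a + u - a) * f' z"
      by auto
    then show ?thesis by (intro exI[of _ z]) auto
  next
    case 3
    from MVT2[of "a+u" a f f'] der 3 obtain z where "a + u < z" "z < a" "f a - f (a+u) = (a - (a + u)) * f' z"
      by auto
    then show ?thesis by (intro exI[of _ z]) (auto simp: algebra_simps)
  qed
qed

lemma nice_lip:
  assumes "nice f f' M D K"
  shows "\<bar>f x - f y\<bar> \<le> D * \<bar>x - y\<bar>"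
proof -
  obtain z where z: "f (y + (x - y)) - f y = f' z * (x - y)" using nice_mvt[OF assms] by blast
  have "\<bar>f' z\<bar> \<le> D" using assms by (auto simp: nice_def)
  then have "\<bar>f' z * (x - y)\<bar> \<le> D * \<bar>x - y\<bar>" by (simp add: abs_mult mult_right_mono)
  with z show ?thesis by simp
qed

lemma nice_taylor:
  assumes "nice f f' M D K"
  shows "\<bar>f (a + u) - f a - f' a * u\<bar> \<le> K * u^2"
proof -
  obtain z where z: "\<bar>z - a\<bar> \<le> \<bar>u\<bar>" "f (a + u) - f a = f' z * u" using nice_mvt[OF assms] by blast
  have K: "\<bar>f' z - f' a\<bar> \<le> K * \<bar>z - a\<bar>" using assms by (auto simp: nice_def)
  have "\<forall>x y. \<bar>f' x - f' y\<bar> \<le> K * \<bar>x - y\<bar>" using assms by (simp add: nice_def)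
  from this[rule_format, of 1 0] have "\<bar>f' 1 - f' 0\<bar> \<le> K" by simp
  then have K0: "K \<ge> 0" by (smt (verit) abs_ge_zero)
  have "\<bar>f (a + u) - f a - f' a * u\<bar> = \<bar>f' z - f' a\<bar> * \<bar>u\<bar>" using z by (simp add: abs_mult[symmetric] algebra_simps)
  also have "\<dots> \<le> K * \<bar>z - a\<bar> * \<bar>u\<bar>" using K by (simp add: mult_right_mono)
  also have "\<dots> \<le> K * \<bar>u\<bar> * \<bar>u\<bar>" using z(1) K0 by (intro mult_right_mono mult_left_mono) auto
  finally show ?thesis by (simp add: power2_eq_square)
qed

lemma nice_nonnegK: "nice f f' M D K \<Longrightarrow> K \<ge> 0 \<and> M \<ge> 0 \<and> D \<ge> 0"
proof -
  assume a: "nice f f' M D K"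
  have "\<forall>x y. \<bar>f' x - f' y\<bar> \<le> K * \<bar>x - y\<bar>" using a by (simp add: nice_def)
  from this[rule_format, of 1 0] have "\<bar>f' 1 - f' 0\<bar> \<le> K" by simp
  moreover have "\<bar>f 0\<bar> \<le> M" "\<bar>f' 0\<bar> \<le> D" using a by (simp_all add: nice_def)
  ultimately show ?thesis by (smt (verit) abs_ge_zero)
qed

lemma nice_neg:
  assumes "nice f f' M D K"
  shows "nice (\<lambda>x. f (- x)) (\<lambda>x. - f' (- x)) M D K"
  unfolding nice_def
proof (intro conjI allI)
  fix x
  have "(f has_real_derivative f' (-x)) (at (-x))" using assms by (simp add: nice_def)
  then show "((\<lambda>x. f (- x)) has_real_derivative - f' (- x)) (at x)"
    using DERIV_mirror by blast
  show "\<bar>f (- x)\<bar> \<le> M" "\<bar>- f' (- x)\<bar> \<le> D" using assms by (simp_all add: nice_def)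
  fix y
  have "\<bar>f' (-x) - f' (-y)\<bar> \<le> K * \<bar>-x - -y\<bar>" using assms unfolding nice_def by blast
  then show "\<bar>- f' (- x) - - f' (- y)\<bar> \<le> K * \<bar>x - y\<bar>" by (simp add: abs_minus_commute)
qed

lemma nice_scale:
  assumes "nice f f' M D K" "l > 0" "b \<ge> 0"
  shows "nice (\<lambda>x. b * f (x / l + s)) (\<lambda>x. b / l * f' (x / l + s)) (b * M) (b * D / l) (b * K / l^2)"
  unfolding nice_def
proof (intro conjI allI)
  fix x
  have "(f has_real_derivative f' (x / l + s)) (at (x / l + s))" using assms by (simp add: nice_def)
  moreover have "((\<lambda>x. x / l + s) has_real_derivative 1 / l) (at x)"
    using assms(2) by (auto intro!: derivative_eq_intros)
  ultimately have "((\<lambda>x. f (x / l + s)) has_real_derivative f' (x / l + s) * (1 / l)) (at x)"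
    by (rule DERIV_chain2)
  then have "((\<lambda>x. b * f (x / l + s)) has_real_derivative b * (f' (x / l + s) * (1 / l))) (at x)"
    by (rule DERIV_cmult)
  then show "((\<lambda>x. b * f (x / l + s)) has_real_derivative b / l * f' (x / l + s)) (at x)"
    by (simp add: field_simps)
  have "\<bar>f (x / l + s)\<bar> \<le> M" "\<bar>f' (x / l + s)\<bar> \<le> D" using assms by (simp_all add: nice_def)
  then have "b * \<bar>f (x / l + s)\<bar> \<le> b * M" "b * \<bar>f' (x / l + s)\<bar> \<le> b * D"
    using assms by (auto intro!: mult_left_mono)
  then show "\<bar>b * f (x / l + s)\<bar> \<le> b * M" "\<bar>b / l * f' (x / l + s)\<bar> \<le> b * D / l"
    using assms by (auto simp: abs_mult intro!: divide_right_mono)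
  fix y
  have "\<bar>f' (x/l + s) - f' (y/l + s)\<bar> \<le> K * \<bar>(x/l + s) - (y/l + s)\<bar>" using assms unfolding nice_def by blast
  also have "\<bar>(x/l + s) - (y/l + s)\<bar> = \<bar>x - y\<bar> / l" using assms by (simp add: diff_divide_distrib[symmetric])
  finally have h: "\<bar>f' (x/l + s) - f' (y/l + s)\<bar> \<le> K * (\<bar>x - y\<bar> / l)" .
  have "b / l * f' (x / l + s) - b / l * f' (y / l + s) = b / l * (f' (x/l + s) - f' (y/l + s))"
    by (simp add: right_diff_distrib)
  then have "\<bar>b / l * f' (x / l + s) - b / l * f' (y / l + s)\<bar> = b / l * \<bar>f' (x/l + s) - f' (y/l + s)\<bar>"
    using assms by (simp only: abs_mult) simp
  also have "\<dots> \<le> b / l * (K * (\<bar>x - y\<bar> / l))" using h assms by (intro mult_left_mono) auto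
  also have "\<dots> = b * K / l^2 * \<bar>x - y\<bar>" by (simp add: power2_eq_square field_simps)
  finally show "\<bar>b / l * f' (x / l + s) - b / l * f' (y / l + s)\<bar> \<le> b * K / l\<^sup>2 * \<bar>x - y\<bar>" .
qed

lemma Psi0_nice: "nice Psi0 dPsi0 1 2 4"
  unfolding nice_def using Psi0_deriv Psi0_bounds dPsi0_bounds dPsi0_lip by (auto simp: abs_le_iff)

lemma prod_taylor:
  assumes f1: "nice f1 f1' M1 D1 K1" and f2: "nice f2 f2' M2 D2 K2"
  shows "\<bar>f1 (u + a) * f2 (v + b) - f1 u * f2 v - f1' u * f2 v * a - f1 u * f2' v * b\<bar>
          \<le> (K1 * M2 + D1 * D2 + M1 * K2) * (a^2 + b^2)"
proof -
  have n1: "K1 \<ge> 0" "M1 \<ge> 0" "D1 \<ge> 0" using nice_nonnegK[OF f1] by auto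
  have n2: "K2 \<ge> 0" "M2 \<ge> 0" "D2 \<ge> 0" using nice_nonnegK[OF f2] by auto
  have t1: "\<bar>f1 (u + a) - f1 u - f1' u * a\<bar> \<le> K1 * a^2" by (rule nice_taylor[OF f1])
  have t2: "\<bar>f2 (v + b) - f2 v - f2' v * b\<bar> \<le> K2 * b^2" by (rule nice_taylor[OF f2])
  have l2: "\<bar>f2 (v + b) - f2 v\<bar> \<le> D2 * \<bar>b\<bar>" using nice_lip[OF f2, of "v+b" v] by simp
  have m2: "\<bar>f2 (v + b)\<bar> \<le> M2" and m1: "\<bar>f1 u\<bar> \<le> M1" and d1: "\<bar>f1' u\<bar> \<le> D1"
    using f1 f2 by (auto simp: nice_def)
  have eq: "f1 (u + a) * f2 (v + b) - f1 u * f2 v - f1' u * f2 v * a - f1 u * f2' v * b =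
     (f1 (u + a) - f1 u - f1' u * a) * f2 (v + b) + f1' u * a * (f2 (v + b) - f2 v) + f1 u * (f2 (v + b) - f2 v - f2' v * b)"
    by (simp add: algebra_simps)
  have "\<bar>(f1 (u + a) - f1 u - f1' u * a) * f2 (v + b)\<bar> \<le> K1 * a^2 * M2"
    unfolding abs_mult by (intro mult_mono t1 m2) (auto simp: n1)
  moreover have "\<bar>f1' u * a * (f2 (v + b) - f2 v)\<bar> \<le> D1 * \<bar>a\<bar> * (D2 * \<bar>b\<bar>)"
    unfolding abs_mult by (intro mult_mono l2 d1 order_refl) (auto simp: n1)
  moreover have "\<bar>f1 u * (f2 (v + b) - f2 v - f2' v * b)\<bar> \<le> M1 * (K2 * b^2)"
    unfolding abs_mult by (intro mult_mono t2 m1) (auto simp: n1)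
  moreover have "\<bar>a\<bar> * \<bar>b\<bar> \<le> a^2 + b^2"
  proof -
    have "0 \<le> (\<bar>a\<bar> - \<bar>b\<bar>)^2" by simp
    then have "2 * (\<bar>a\<bar> * \<bar>b\<bar>) \<le> \<bar>a\<bar>^2 + \<bar>b\<bar>^2" by (simp add: power2_diff)
    then have h: "2 * (\<bar>a\<bar> * \<bar>b\<bar>) \<le> a^2 + b^2" by simp
    have "0 \<le> \<bar>a\<bar> * \<bar>b\<bar>" by simp
    with h show ?thesis by linarith
  qed
  then have "D1 * \<bar>a\<bar> * (D2 * \<bar>b\<bar>) \<le> D1 * D2 * (a^2 + b^2)"
    using n1 n2 by (simp add: mult_left_mono mult.assoc mult.left_commute)
  moreover have "K1 * a^2 * M2 \<le> K1 * M2 * (a^2 + b^2)"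
    using n1 n2 mult_left_mono[of "a^2" "a^2+b^2" "K1 * M2"] by (simp add: mult.commute mult.left_commute)
  moreover have "M1 * (K2 * b^2) \<le> M1 * K2 * (a^2 + b^2)"
    using n1 n2 mult_left_mono[of "b^2" "a^2+b^2" "K2 * M1"] by (simp add: mult.commute mult.left_commute)
  moreover have "\<And>X Y Z::real. \<bar>X + Y + Z\<bar> \<le> \<bar>X\<bar> + \<bar>Y\<bar> + \<bar>Z\<bar>"
    by (metis abs_triangle_ineq add_right_mono order_trans)
  moreover have "(K1 * M2 + D1 * D2 + M1 * K2) * (a^2 + b^2) = K1 * M2 * (a^2 + b^2) + D1 * D2 * (a^2 + b^2) + M1 * K2 * (a^2 + b^2)"
    by (simp add: distrib_right)
  ultimately show ?thesis unfolding eq by (smt (verit))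
qed

lemma prod_lip1:
  assumes f1: "nice f1 f1' M1 D1 K1" and f2: "nice f2 f2' M2 D2 K2"
  shows "\<bar>f1 u * f2' v - f1 u' * f2' v'\<bar> \<le> D1 * D2 * \<bar>u - u'\<bar> + M1 * K2 * \<bar>v - v'\<bar>"
proof -
  have n1: "K1 \<ge> 0" "M1 \<ge> 0" "D1 \<ge> 0" using nice_nonnegK[OF f1] by auto
  have a: "\<bar>f1 u - f1 u'\<bar> \<le> D1 * \<bar>u - u'\<bar>" by (rule nice_lip[OF f1])
  have b: "\<bar>f2' v - f2' v'\<bar> \<le> K2 * \<bar>v - v'\<bar>" "\<bar>f2' v\<bar> \<le> D2" "\<bar>f1 u'\<bar> \<le> M1" using f1 f2 by (auto simp: nice_def)
  have "f1 u * f2' v - f1 u' * f2' v' = (f1 u - f1 u') * f2' v + f1 u' * (f2' v - f2' v')" by (simp add: algebra_simps)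
  moreover have "\<bar>(f1 u - f1 u') * f2' v\<bar> \<le> D1 * \<bar>u - u'\<bar> * D2" unfolding abs_mult by (intro mult_mono a b) (auto simp: n1)
  moreover have "\<bar>f1 u' * (f2' v - f2' v')\<bar> \<le> M1 * (K2 * \<bar>v - v'\<bar>)" unfolding abs_mult by (intro mult_mono b) (auto simp: n1)
  moreover have "\<And>X Y::real. \<bar>X + Y\<bar> \<le> \<bar>X\<bar> + \<bar>Y\<bar>" by (rule abs_triangle_ineq)
  ultimately show ?thesis by (simp add: algebra_simps)
qed

lemma prod_lip2:
  assumes f1: "nice f1 f1' M1 D1 K1" and f2: "nice f2 f2' M2 D2 K2"
  shows "\<bar>f1' u * f2 v - f1' u' * f2 v'\<bar> \<le> K1 * M2 * \<bar>u - u'\<bar> + D1 * D2 * \<bar>v - v'\<bar>"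
proof -
  have n1: "K1 \<ge> 0" "M1 \<ge> 0" "D1 \<ge> 0" using nice_nonnegK[OF f1] by auto
  have a: "\<bar>f2 v - f2 v'\<bar> \<le> D2 * \<bar>v - v'\<bar>" by (rule nice_lip[OF f2])
  have b: "\<bar>f1' u - f1' u'\<bar> \<le> K1 * \<bar>u - u'\<bar>" "\<bar>f2 v\<bar> \<le> M2" "\<bar>f1' u'\<bar> \<le> D1" using f1 f2 by (auto simp: nice_def)
  have "f1' u * f2 v - f1' u' * f2 v' = (f1' u - f1' u') * f2 v + f1' u' * (f2 v - f2 v')" by (simp add: algebra_simps)
  moreover have "\<bar>(f1' u - f1' u') * f2 v\<bar> \<le> K1 * \<bar>u - u'\<bar> * M2" unfolding abs_mult by (intro mult_mono a b) (auto simp: n1)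
  moreover have "\<bar>f1' u' * (f2 v - f2 v')\<bar> \<le> D1 * (D2 * \<bar>v - v'\<bar>)" unfolding abs_mult by (intro mult_mono a b) (auto simp: n1)
  moreover have "\<And>X Y::real. \<bar>X + Y\<bar> \<le> \<bar>X\<bar> + \<bar>Y\<bar>" by (rule abs_triangle_ineq)
  ultimately show ?thesis by (simp add: algebra_simps)
qed




definition yv :: "real \<Rightarrow> vecn \<Rightarrow> nat \<Rightarrow> real" where
  "yv lam x i = (if i = 0 then lam else x (i - 1))"

definition Fc :: "nat \<Rightarrow> real \<Rightarrow> (real \<Rightarrow> real) \<Rightarrow> (real \<Rightarrow> real) \<Rightarrow> vecn \<Rightarrow> real" where
  "Fc T lam ps ph x = (\<Sum>i<T. ps (- yv lam x i) * ph (- x i) - ps (yv lam x i) * ph (x i))"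

definition Aj where
  "Aj lam ps ph' x j = - (ps (- yv lam x j) * ph' (- x j)) - ps (yv lam x j) * ph' (x j)"
definition Bj where
  "Bj lam ps' ph x j = - (ps' (- yv lam x j) * ph (- x j)) - ps' (yv lam x j) * ph (x j)"

definition gFc :: "nat \<Rightarrow> real \<Rightarrow> (real \<Rightarrow> real) \<Rightarrow> (real \<Rightarrow> real) \<Rightarrow> (real \<Rightarrow> real) \<Rightarrow> (real \<Rightarrow> real) \<Rightarrow> vecn \<Rightarrow> vecn" where
  "gFc T lam ps ps' ph ph' x k = (if k < T then Aj lam ps ph' x k + (if Suc k < T then Bj lam ps' ph x (Suc k) else 0) else 0)"

lemma sum_shift1:
  fixes g :: "nat \<Rightarrow> real"
  shows "(\<Sum>i<T. B i * (if i = 0 then 0 else g (i - 1))) = (\<Sum>k<T. (if Suc k < T then B (Suc k) else 0) * g k)"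
proof (cases T)
  case 0 then show ?thesis by simp
next
  case (Suc m)
  have "(\<Sum>i<Suc m. B i * (if i = 0 then 0 else g (i - 1))) = (\<Sum>i<m. B (Suc i) * g i)"
    by (subst sum.lessThan_Suc_shift) simp
  moreover have "(\<Sum>k<Suc m. (if Suc k < Suc m then B (Suc k) else 0) * g k) = (\<Sum>i<m. B (Suc i) * g i)"
    by (simp add: sum.lessThan_Suc)
  ultimately show ?thesis using Suc by simp
qed

lemma sum_shift_le1:
  fixes g :: "nat \<Rightarrow> real"
  assumes "\<And>k. g k \<ge> 0"
  shows "(\<Sum>i<T. (if i = 0 then 0 else g (i - 1))) \<le> (\<Sum>k<T. g k)"
proof (cases T)
  case 0 then show ?thesis by simp
next
  case (Suc m)
  have "(\<Sum>i<Suc m. (if i = 0 then 0 else g (i - 1))) = (\<Sum>i<m. g i)"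
    by (subst sum.lessThan_Suc_shift) simp
  also have "\<dots> \<le> (\<Sum>i<Suc m. g i)" using assms by (simp add: sum.lessThan_Suc)
  finally show ?thesis using Suc by simp
qed

lemma sum_shift_le2:
  fixes g :: "nat \<Rightarrow> real"
  assumes "\<And>k. g k \<ge> 0"
  shows "(\<Sum>k<T. (if Suc k < T then g (Suc k) else 0)) \<le> (\<Sum>k<T. g k)"
proof (cases T)
  case 0 then show ?thesis by simp
next
  case (Suc m)
  have "(\<Sum>k<Suc m. (if Suc k < Suc m then g (Suc k) else 0)) = (\<Sum>i<m. g (Suc i))"
    by (simp add: sum.lessThan_Suc)
  also have "\<dots> \<le> (\<Sum>i<Suc m. g i)" using assms by (subst sum.lessThan_Suc_shift) simp
  finally show ?thesis using Suc by simp
qed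

locale chain =
  fixes T :: nat and lam :: real and ps ps' ph ph' :: "real \<Rightarrow> real" and M1 D1 K1 M2 D2 K2 :: real
  assumes ps: "nice ps ps' M1 D1 K1" and ph: "nice ph ph' M2 D2 K2"
begin

definition "C = K1 * M2 + D1 * D2 + M1 * K2"

lemma nn: "K1 \<ge> 0" "M1 \<ge> 0" "D1 \<ge> 0" "K2 \<ge> 0" "M2 \<ge> 0" "D2 \<ge> 0" "C \<ge> 0"
  using nice_nonnegK[OF ps] nice_nonnegK[OF ph] by (auto simp: C_def)

lemma psn: "nice (\<lambda>x. ps (- x)) (\<lambda>x. - ps' (- x)) M1 D1 K1" by (rule nice_neg[OF ps])
lemma phn: "nice (\<lambda>x. ph (- x)) (\<lambda>x. - ph' (- x)) M2 D2 K2" by (rule nice_neg[OF ph])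

lemma term_taylor:
  "\<bar>(ps (- (y + a)) * ph (- (u + b)) - ps (y + a) * ph (u + b)) - (ps (- y) * ph (- u) - ps y * ph u)
    - (- (ps' (- y) * ph (- u)) - ps' y * ph u) * a - (- (ps (- y) * ph' (- u)) - ps y * ph' u) * b\<bar>
   \<le> 2 * C * (a^2 + b^2)"
proof -
  have t1: "\<bar>ps (- (y + a)) * ph (- (u + b)) - ps (- y) * ph (- u) - (- ps' (- y)) * ph (- u) * a - ps (- y) * (- ph' (- u)) * b\<bar>
      \<le> C * (a^2 + b^2)"
    using prod_taylor[OF psn phn, of y a u b] by (simp add: C_def)
  have t2: "\<bar>ps (y + a) * ph (u + b) - ps y * ph u - ps' y * ph u * a - ps y * ph' u * b\<bar> \<le> C * (a^2 + b^2)"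
    using prod_taylor[OF ps ph, of y a u b] by (simp add: C_def)
  have e: "(ps (- (y + a)) * ph (- (u + b)) - ps (y + a) * ph (u + b)) - (ps (- y) * ph (- u) - ps y * ph u)
    - (- (ps' (- y) * ph (- u)) - ps' y * ph u) * a - (- (ps (- y) * ph' (- u)) - ps y * ph' u) * b
    = (ps (- (y + a)) * ph (- (u + b)) - ps (- y) * ph (- u) - (- ps' (- y)) * ph (- u) * a - ps (- y) * (- ph' (- u)) * b)
     - (ps (y + a) * ph (u + b) - ps y * ph u - ps' y * ph u * a - ps y * ph' u * b)"
    by (simp add: algebra_simps)
  show ?thesis unfolding e by (rule order.trans[OF abs_triangle_ineq4]) (use t1 t2 in linarith)
qed

lemma F_taylor:
  "\<bar>Fc T lam ps ph (\<lambda>j. x j + h j) - Fc T lam ps ph x - (\<Sum>k<T. gFc T lam ps ps' ph ph' x k * h k)\<bar>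
     \<le> 4 * C * (\<Sum>k<T. (h k)^2)"
proof -
  define dy where "dy i = (if i = 0 then 0 else h (i - 1))" for i
  have yvh: "yv lam (\<lambda>j. x j + h j) i = yv lam x i + dy i" for i by (simp add: yv_def dy_def)
  have gsum: "(\<Sum>k<T. gFc T lam ps ps' ph ph' x k * h k) =
     (\<Sum>i<T. Bj lam ps' ph x i * dy i + Aj lam ps ph' x i * h i)"
  proof -
    have "(\<Sum>k<T. gFc T lam ps ps' ph ph' x k * h k) =
       (\<Sum>k<T. Aj lam ps ph' x k * h k) + (\<Sum>k<T. (if Suc k < T then Bj lam ps' ph x (Suc k) else 0) * h k)"
      by (simp add: gFc_def distrib_right sum.distrib)
    also have "(\<Sum>k<T. (if Suc k < T then Bj lam ps' ph x (Suc k) else 0) * h k) = (\<Sum>i<T. Bj lam ps' ph x i * dy i)"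
      unfolding dy_def by (rule sum_shift1[symmetric])
    finally show ?thesis by (simp add: sum.distrib)
  qed
  have "\<bar>Fc T lam ps ph (\<lambda>j. x j + h j) - Fc T lam ps ph x - (\<Sum>k<T. gFc T lam ps ps' ph ph' x k * h k)\<bar>
     = \<bar>\<Sum>i<T. ((ps (- (yv lam x i + dy i)) * ph (- (x i + h i)) - ps (yv lam x i + dy i) * ph (x i + h i))
          - (ps (- yv lam x i) * ph (- x i) - ps (yv lam x i) * ph (x i))
          - Bj lam ps' ph x i * dy i - Aj lam ps ph' x i * h i)\<bar>"
    unfolding gsum Fc_def yvh by (simp add: sum_subtractf sum.distrib)
  also have "\<dots> \<le> (\<Sum>i<T. 2 * C * (dy i ^ 2 + h i ^ 2))"
    by (rule order.trans[OF sum_abs sum_mono]) (use term_taylor in \<open>simp add: Aj_def Bj_def\<close>)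
  also have "\<dots> = 2 * C * ((\<Sum>i<T. dy i ^ 2) + (\<Sum>i<T. h i ^ 2))"
    by (simp add: sum_distrib_left sum.distrib distrib_left)
  also have "\<dots> \<le> 2 * C * ((\<Sum>i<T. h i ^ 2) + (\<Sum>i<T. h i ^ 2))"
  proof -
    have "(\<Sum>i<T. dy i ^ 2) = (\<Sum>i<T. (if i = 0 then 0 else h (i - 1) ^ 2))"
      by (intro sum.cong) (auto simp: dy_def)
    also have "\<dots> \<le> (\<Sum>i<T. h i ^ 2)" by (rule sum_shift_le1) simp
    finally show ?thesis using nn by (intro mult_left_mono) auto
  qed
  finally show ?thesis by simp
qed

lemma A_lip: "\<bar>Aj lam ps ph' x j - Aj lam ps ph' x' j\<bar> \<le> 2 * C * (\<bar>yv lam x j - yv lam x' j\<bar> + \<bar>x j - x' j\<bar>)"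
proof -
  let ?y = "yv lam x j" and ?y' = "yv lam x' j"
  have a: "\<bar>ps (- ?y) * (- ph' (- x j)) - ps (- ?y') * (- ph' (- x' j))\<bar> \<le> D1 * D2 * \<bar>?y - ?y'\<bar> + M1 * K2 * \<bar>x j - x' j\<bar>"
    using prod_lip1[OF psn phn, of ?y "x j" ?y' "x' j"] by simp
  have b: "\<bar>ps ?y * ph' (x j) - ps ?y' * ph' (x' j)\<bar> \<le> D1 * D2 * \<bar>?y - ?y'\<bar> + M1 * K2 * \<bar>x j - x' j\<bar>"
    using prod_lip1[OF ps ph, of ?y "x j" ?y' "x' j"] by simp
  have c: "D1 * D2 * \<bar>?y - ?y'\<bar> + M1 * K2 * \<bar>x j - x' j\<bar> \<le> C * (\<bar>?y - ?y'\<bar> + \<bar>x j - x' j\<bar>)"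
    using nn unfolding C_def by (simp add: distrib_left mult_right_mono add_mono)
  have "Aj lam ps ph' x j - Aj lam ps ph' x' j = (ps (- ?y) * (- ph' (- x j)) - ps (- ?y') * (- ph' (- x' j)))
      - (ps ?y * ph' (x j) - ps ?y' * ph' (x' j))" by (simp add: Aj_def algebra_simps)
  then have "\<bar>Aj lam ps ph' x j - Aj lam ps ph' x' j\<bar> \<le> \<bar>ps (- ?y) * (- ph' (- x j)) - ps (- ?y') * (- ph' (- x' j))\<bar>
      + \<bar>ps ?y * ph' (x j) - ps ?y' * ph' (x' j)\<bar>" by (simp add: abs_triangle_ineq4)
  with a b c show ?thesis by linarith
qed

lemma B_lip: "\<bar>Bj lam ps' ph x j - Bj lam ps' ph x' j\<bar> \<le> 2 * C * (\<bar>yv lam x j - yv lam x' j\<bar> + \<bar>x j - x' j\<bar>)"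
proof -
  let ?y = "yv lam x j" and ?y' = "yv lam x' j"
  have a: "\<bar>(- ps' (- ?y)) * ph (- x j) - (- ps' (- ?y')) * ph (- x' j)\<bar> \<le> K1 * M2 * \<bar>?y - ?y'\<bar> + D1 * D2 * \<bar>x j - x' j\<bar>"
    using prod_lip2[OF psn phn, of ?y "x j" ?y' "x' j"] by simp
  have b: "\<bar>ps' ?y * ph (x j) - ps' ?y' * ph (x' j)\<bar> \<le> K1 * M2 * \<bar>?y - ?y'\<bar> + D1 * D2 * \<bar>x j - x' j\<bar>"
    using prod_lip2[OF ps ph, of ?y "x j" ?y' "x' j"] by simp
  have c: "K1 * M2 * \<bar>?y - ?y'\<bar> + D1 * D2 * \<bar>x j - x' j\<bar> \<le> C * (\<bar>?y - ?y'\<bar> + \<bar>x j - x' j\<bar>)"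
    using nn unfolding C_def by (simp add: distrib_left mult_right_mono add_mono)
  have "Bj lam ps' ph x j - Bj lam ps' ph x' j = ((- ps' (- ?y)) * ph (- x j) - (- ps' (- ?y')) * ph (- x' j))
      - (ps' ?y * ph (x j) - ps' ?y' * ph (x' j))" by (simp add: Bj_def algebra_simps)
  then have "\<bar>Bj lam ps' ph x j - Bj lam ps' ph x' j\<bar> \<le> \<bar>(- ps' (- ?y)) * ph (- x j) - (- ps' (- ?y')) * ph (- x' j)\<bar>
      + \<bar>ps' ?y * ph (x j) - ps' ?y' * ph (x' j)\<bar>" by (simp add: abs_triangle_ineq4)
  with a b c show ?thesis by linarith
qed

lemma sq_bound: fixes a b c :: real assumes "\<bar>a\<bar> \<le> c * (\<bar>u\<bar> + \<bar>v\<bar>)" "c \<ge> 0"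
  shows "a^2 \<le> 2 * c^2 * (u^2 + v^2)"
proof -
  have "a^2 \<le> (c * (\<bar>u\<bar> + \<bar>v\<bar>))^2" using assms by (metis abs_ge_zero abs_power2 order.trans power_mono power2_abs)
  also have "\<dots> = c^2 * (\<bar>u\<bar> + \<bar>v\<bar>)^2" by (simp add: power_mult_distrib)
  also have "(\<bar>u\<bar> + \<bar>v\<bar>)^2 \<le> 2 * (u^2 + v^2)"
  proof -
    have "0 \<le> (\<bar>u\<bar> - \<bar>v\<bar>)^2" by simp
    then show ?thesis by (simp add: power2_sum power2_diff)
  qed
  then have "c^2 * (\<bar>u\<bar> + \<bar>v\<bar>)^2 \<le> c^2 * (2 * (u^2 + v^2))" by (intro mult_left_mono) auto
  finally show ?thesis by (simp add: algebra_simps)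
qed

lemma grad_lip_sq:
  "(\<Sum>k<T. (gFc T lam ps ps' ph ph' x k - gFc T lam ps ps' ph ph' x' k)^2) \<le> 64 * C^2 * (\<Sum>k<T. (x k - x' k)^2)"
proof -
  define d where "d k = (x k - x' k)^2" for k
  have dy: "yv lam x k - yv lam x' k = (if k = 0 then 0 else x (k - 1) - x' (k - 1))" for k by (simp add: yv_def)
  have comp: "(gFc T lam ps ps' ph ph' x k - gFc T lam ps ps' ph ph' x' k)^2 \<le>
      16 * C^2 * ((if k = 0 then 0 else d (k - 1)) + 2 * d k + (if Suc k < T then d (Suc k) else 0))" if k: "k < T" for k
  proof -
    define a where "a = Aj lam ps ph' x k - Aj lam ps ph' x' k"
    define b where "b = (if Suc k < T then Bj lam ps' ph x (Suc k) - Bj lam ps' ph x' (Suc k) else 0)"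
    have e: "gFc T lam ps ps' ph ph' x k - gFc T lam ps ps' ph ph' x' k = a + b"
      using k by (simp add: gFc_def a_def b_def)
    have ab: "(a + b)^2 \<le> 2 * a^2 + 2 * b^2"
    proof -
      have "0 \<le> (a - b)^2" by simp
      then show ?thesis by (simp add: power2_sum power2_diff)
    qed
    have "\<bar>a\<bar> \<le> (2 * C) * (\<bar>yv lam x k - yv lam x' k\<bar> + \<bar>x k - x' k\<bar>)" unfolding a_def by (rule A_lip)
    then have a2: "a^2 \<le> 2 * (2 * C)^2 * ((yv lam x k - yv lam x' k)^2 + (x k - x' k)^2)"
      by (rule sq_bound) (use nn in simp)
    have "(yv lam x k - yv lam x' k)^2 = (if k = 0 then 0 else d (k - 1))" by (simp add: dy d_def)
    then have a3: "a^2 \<le> 8 * C^2 * ((if k = 0 then 0 else d (k - 1)) + d k)"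
      using a2 by (simp add: d_def power_mult_distrib)
    have b3: "b^2 \<le> 8 * C^2 * (d k + (if Suc k < T then d (Suc k) else 0))"
    proof (cases "Suc k < T")
      case True
      have "\<bar>b\<bar> \<le> (2 * C) * (\<bar>yv lam x (Suc k) - yv lam x' (Suc k)\<bar> + \<bar>x (Suc k) - x' (Suc k)\<bar>)"
        unfolding b_def using True B_lip by simp
      then have "b^2 \<le> 2 * (2 * C)^2 * ((yv lam x (Suc k) - yv lam x' (Suc k))^2 + (x (Suc k) - x' (Suc k))^2)"
        by (rule sq_bound) (use nn in simp)
      then show ?thesis using True by (simp add: d_def yv_def power_mult_distrib)
    next
      case False
      have "0 \<le> d k" by (simp add: d_def)
      then show ?thesis using False by (simp add: b_def)
    qed
    have "(a + b)^2 \<le> 2 * (8 * C^2 * ((if k = 0 then 0 else d (k - 1)) + d k)) + 2 * (8 * C^2 * (d k + (if Suc k < T then d (Suc k) else 0)))"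
      using ab a3 b3 by linarith
    then show ?thesis unfolding e by (simp add: algebra_simps)
  qed
  have dn: "0 \<le> d k" for k by (simp add: d_def)
  have "(\<Sum>k<T. (gFc T lam ps ps' ph ph' x k - gFc T lam ps ps' ph ph' x' k)^2) \<le>
      (\<Sum>k<T. 16 * C^2 * ((if k = 0 then 0 else d (k - 1)) + 2 * d k + (if Suc k < T then d (Suc k) else 0)))"
    by (rule sum_mono) (use comp in auto)
  also have "\<dots> = 16 * C^2 * ((\<Sum>k<T. (if k = 0 then 0 else d (k - 1))) + 2 * (\<Sum>k<T. d k) + (\<Sum>k<T. (if Suc k < T then d (Suc k) else 0)))"
    by (simp add: sum_distrib_left sum.distrib distrib_left)
  also have "\<dots> \<le> 16 * C^2 * ((\<Sum>k<T. d k) + 2 * (\<Sum>k<T. d k) + (\<Sum>k<T. d k))"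
    using sum_shift_le1[of d T] sum_shift_le2[of d T] dn by (intro mult_left_mono add_mono) auto
  finally show ?thesis by (simp add: d_def)
qed

lemma grad_lip:
  "sqrt (\<Sum>k<T. (gFc T lam ps ps' ph ph' x k - gFc T lam ps ps' ph ph' x' k)^2) \<le> 8 * C * sqrt (\<Sum>k<T. (x k - x' k)^2)"
proof -
  have "sqrt (\<Sum>k<T. (gFc T lam ps ps' ph ph' x k - gFc T lam ps ps' ph ph' x' k)^2) \<le> sqrt (64 * C^2 * (\<Sum>k<T. (x k - x' k)^2))"
    using grad_lip_sq by (rule real_sqrt_le_mono)
  also have "\<dots> = 8 * C * sqrt (\<Sum>k<T. (x k - x' k)^2)"
    using nn by (simp add: real_sqrt_mult)
  finally show ?thesis .
qed

lemma grad_lower: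
  assumes lam: "lam > 0" and T: "0 < T" and xT: "x (T - 1) = 0"
    and sg: "\<And>z. ps z \<ge> 0" "\<And>z. ps' z \<ge> 0" "\<And>z. ph z \<ge> 0" "\<And>z. ph' z \<ge> 0"
    and big: "\<And>y. y \<ge> lam \<Longrightarrow> ps y \<ge> a0" and big2: "\<And>z. \<bar>z\<bar> < lam \<Longrightarrow> ph' z \<ge> b0"
    and ab: "a0 \<ge> 0" "b0 \<ge> 0"
  shows "(a0 * b0)^2 \<le> (\<Sum>k<T. (gFc T lam ps ps' ph ph' x k)^2)"
proof -
  define j where "j = (LEAST j. \<bar>x j\<bar> < lam)"
  have ex: "\<bar>x (T - 1)\<bar> < lam" using xT lam by simp
  have j1: "\<bar>x j\<bar> < lam" unfolding j_def by (rule LeastI[of _ "T - 1"]) (rule ex)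
  have jT: "j \<le> T - 1" unfolding j_def by (rule Least_le) (rule ex)
  then have jT': "j < T" using T by linarith
  have ylam: "\<bar>yv lam x j\<bar> \<ge> lam"
  proof (cases "j = 0")
    case True then show ?thesis using lam by (simp add: yv_def)
  next
    case False
    then have "j - 1 < j" by simp
    then have "\<not> \<bar>x (j - 1)\<bar> < lam" unfolding j_def by (rule not_less_Least)
    then show ?thesis using False by (simp add: yv_def)
  qed
  let ?y = "yv lam x j"
  have P: "ps (- ?y) * ph' (- x j) \<ge> 0" "ps ?y * ph' (x j) \<ge> 0" using sg by auto
  have big3: "ps (- ?y) * ph' (- x j) + ps ?y * ph' (x j) \<ge> a0 * b0"
  proof (cases "?y \<ge> lam")
    case True
    have "ps ?y * ph' (x j) \<ge> a0 * b0" using big[OF True] big2[OF j1] ab by (intro mult_mono) auto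
    then show ?thesis using P by linarith
  next
    case False
    then have "- ?y \<ge> lam" using ylam by linarith
    moreover have "\<bar>- x j\<bar> < lam" using j1 by simp
    ultimately have "ps (- ?y) * ph' (- x j) \<ge> a0 * b0" using big big2 ab sg by (intro mult_mono) auto
    then show ?thesis using P by linarith
  qed
  have Bn: "(if Suc j < T then Bj lam ps' ph x (Suc j) else 0) \<le> 0"
  proof -
    have "0 \<le> ps' (- yv lam x (Suc j)) * ph (- x (Suc j))" "0 \<le> ps' (yv lam x (Suc j)) * ph (x (Suc j))"
      using sg by auto
    then show ?thesis by (simp add: Bj_def)
  qed
  have "gFc T lam ps ps' ph ph' x j \<le> - (a0 * b0)"
    using big3 Bn jT' by (simp add: gFc_def Aj_def)
  then have "(a0 * b0)^2 \<le> (gFc T lam ps ps' ph ph' x j)^2"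
  proof -
    have "(a0 * b0)^2 \<le> (- gFc T lam ps ps' ph ph' x j)^2"
      using \<open>gFc T lam ps ps' ph ph' x j \<le> - (a0 * b0)\<close> ab by (intro power_mono) auto
    then show ?thesis by simp
  qed
  also have "\<dots> \<le> (\<Sum>k<T. (gFc T lam ps ps' ph ph' x k)^2)"
    using jT' by (intro member_le_sum) auto
  finally show ?thesis .
qed

lemma zero_chain:
  assumes "ps 0 = 0" "ps' 0 = 0" and xz: "\<And>j. j \<ge> P \<Longrightarrow> x j = 0" and k: "k \<ge> Suc P"
  shows "gFc T lam ps ps' ph ph' x k = 0"
proof -
  have "yv lam x k = 0" using k xz by (simp add: yv_def)
  moreover have "x k = 0" using k xz by simp
  moreover have "yv lam x (Suc k) = 0" using k xz by (simp add: yv_def)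
  ultimately show ?thesis using assms by (simp add: gFc_def Aj_def Bj_def)
qed

lemma F_gap:
  "Fc T lam ps ph (\<lambda>_. 0) - Fc T lam ps ph x \<le> 2 * (real T + 1) * (M1 * M2)"
proof -
  have bnd: "\<bar>ps a * ph b\<bar> \<le> M1 * M2" for a b
    using ps ph nn unfolding abs_mult nice_def by (intro mult_mono) auto
  have t: "\<bar>ps (- u) * ph (- v) - ps u * ph v\<bar> \<le> 2 * (M1 * M2)" for u v
    using bnd[of "-u" "-v"] bnd[of u v] by (smt (verit) abs_triangle_ineq4)
  have F0: "Fc T lam ps ph (\<lambda>_. 0) \<le> 2 * (M1 * M2)"
  proof (cases T)
    case 0 then show ?thesis using nn by (simp add: Fc_def)
  next
    case (Suc m)
    have "Fc T lam ps ph (\<lambda>_. 0) = ps (- lam) * ph (- 0) - ps lam * ph 0"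
      unfolding Fc_def Suc by (subst sum.lessThan_Suc_shift) (simp add: yv_def)
    then show ?thesis using t[of lam 0] by simp
  qed
  have "- Fc T lam ps ph x \<le> (\<Sum>i<T. 2 * (M1 * M2))"
    unfolding Fc_def sum_negf[symmetric] by (rule sum_mono) (use t in \<open>smt (verit)\<close>)
  then have "- Fc T lam ps ph x \<le> 2 * real T * (M1 * M2)" by simp
  with F0 show ?thesis by (simp add: algebra_simps)
qed

lemma grad_upper: "\<bar>gFc T lam ps ps' ph ph' x k\<bar> \<le> 2 * (M1 * D2) + 2 * (D1 * M2)"
proof -
  have b1: "\<bar>ps a * ph' b\<bar> \<le> M1 * D2" for a b
    using ps ph nn unfolding abs_mult nice_def by (intro mult_mono) auto
  have b2: "\<bar>ps' a * ph b\<bar> \<le> D1 * M2" for a b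
    using ps ph nn unfolding abs_mult nice_def by (intro mult_mono) auto
  have A: "\<bar>Aj lam ps ph' x k\<bar> \<le> 2 * (M1 * D2)"
    using b1[of "- yv lam x k" "- x k"] b1[of "yv lam x k" "x k"] unfolding Aj_def by linarith
  have B: "\<bar>Bj lam ps' ph x (Suc k)\<bar> \<le> 2 * (D1 * M2)"
    using b2[of "- yv lam x (Suc k)" "- x (Suc k)"] b2[of "yv lam x (Suc k)" "x (Suc k)"] unfolding Bj_def by linarith
  show ?thesis using A B nn by (auto simp: gFc_def)
qed

end



definition "psi lam = (\<lambda>x. 1 * Psi0 (x / lam + 0))"
definition "dpsi lam = (\<lambda>x. 1 / lam * dPsi0 (x / lam + 0))"
definition "phi lam beta = (\<lambda>x. beta * Psi0 (x / (4 * lam) + 1/2))"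
definition "dphi lam beta = (\<lambda>x. beta / (4 * lam) * dPsi0 (x / (4 * lam) + 1/2))"

definition "lamI L g = 42 * g / L"
definition "betaI L g = g * lamI L g"

definition "FI T L g = Fc T (lamI L g) (psi (lamI L g)) (phi (lamI L g) (betaI L g))"
definition "gI T L g = gFc T (lamI L g) (psi (lamI L g)) (dpsi (lamI L g)) (phi (lamI L g) (betaI L g)) (dphi (lamI L g) (betaI L g))"

lemma psi_nice: "lam > 0 \<Longrightarrow> nice (psi lam) (dpsi lam) 1 (2 / lam) (4 / lam^2)"
  unfolding psi_def dpsi_def using nice_scale[OF Psi0_nice, of lam 1 0] by simp

lemma phi_nice: "lam > 0 \<Longrightarrow> beta \<ge> 0 \<Longrightarrow> nice (phi lam beta) (dphi lam beta) beta (beta * 2 / (4 * lam)) (beta * 4 / (4 * lam)^2)"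
  unfolding phi_def dphi_def using nice_scale[OF Psi0_nice, of "4 * lam" beta "1/2"] by simp

locale inst =
  fixes T :: nat and L g :: real
  assumes L: "L > 0" and g: "g > 0"
begin

abbreviation "lam \<equiv> lamI L g"
abbreviation "beta \<equiv> betaI L g"

lemma lam_pos: "lam > 0" using L g by (simp add: lamI_def)
lemma beta_pos: "beta > 0" using lam_pos g by (simp add: betaI_def)

sublocale ch: chain T lam "psi lam" "dpsi lam" "phi lam beta" "dphi lam beta"
  1 "2 / lam" "4 / lam^2" beta "beta * 2 / (4 * lam)" "beta * 4 / (4 * lam)^2"
  by unfold_locales (use psi_nice phi_nice lam_pos beta_pos in auto)

lemma C_val: "8 * ch.C = L"
proof -
  have "8 * ch.C = 42 * beta / lam^2"
    unfolding ch.C_def using lam_pos by (simp add: field_simps power2_eq_square)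
  also have "\<dots> = L" using lam_pos g L by (simp add: betaI_def lamI_def power2_eq_square field_simps)
  finally show ?thesis .
qed

lemma in_vecd: "gI T L g x \<in> vecd T"
  by (simp add: vecd_def gI_def gFc_def)

lemma normd_sq: "(normd d x)^2 = (\<Sum>j<d. (x j)^2)"
  by (simp add: normd_def sum_nonneg)

lemma hasgrad: "has_grad T (FI T L g) (gI T L g x) x"
  unfolding has_grad_def
proof (intro allI impI)
  fix e :: real assume e: "e > 0"
  define K where "K = 4 * ch.C + 1"
  have K: "K > 0" using ch.nn by (simp add: K_def)
  show "\<exists>\<delta>>0. \<forall>h\<in>vecd T. normd T h < \<delta> \<longrightarrow>
          \<bar>FI T L g (\<lambda>j. x j + h j) - FI T L g x - (\<Sum>j<T. gI T L g x j * h j)\<bar> \<le> e * normd T h"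
  proof (intro exI[of _ "e / K"] conjI ballI impI)
    show "e / K > 0" using e K by simp
    fix h assume h: "h \<in> vecd T" "normd T h < e / K"
    have "\<bar>FI T L g (\<lambda>j. x j + h j) - FI T L g x - (\<Sum>j<T. gI T L g x j * h j)\<bar> \<le> 4 * ch.C * (\<Sum>k<T. (h k)^2)"
      unfolding FI_def gI_def by (rule ch.F_taylor)
    also have "\<dots> = 4 * ch.C * (normd T h * normd T h)" using normd_sq[of T h] by (simp add: power2_eq_square)
    also have "\<dots> \<le> K * (normd T h * normd T h)"
      by (intro mult_right_mono) (auto simp: K_def normd_def)
    also have "\<dots> = (K * normd T h) * normd T h" by simp
    also have "\<dots> \<le> e * normd T h"
    proof (intro mult_right_mono)
      show "K * normd T h \<le> e" using h(2) K by (simp add: field_simps)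
    qed (simp add: normd_def sum_nonneg)
    finally show "\<bar>FI T L g (\<lambda>j. x j + h j) - FI T L g x - (\<Sum>j<T. gI T L g x j * h j)\<bar> \<le> e * normd T h" .
  qed
qed

lemma lip: "normd T (\<lambda>j. gI T L g x j - gI T L g y j) \<le> L * normd T (\<lambda>j. x j - y j)"
  using ch.grad_lip[of x y] C_val by (simp add: normd_def gI_def)

lemma gap: "FI T L g (\<lambda>_. 0) - FI T L g x \<le> 2 * (real T + 1) * beta"
  using ch.F_gap[of x] by (simp add: FI_def)

lemma inFDL: "2 * (real T + 1) * beta \<le> Delta \<Longrightarrow> in_FDL T Delta L (FI T L g) (gI T L g)"
  unfolding in_FDL_def using in_vecd hasgrad lip gap by (meson order.trans)

lemma lower:
  assumes T: "0 < T" and xT: "x (T - 1) = 0"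
  shows "(g / 4)^2 \<le> (normd T (gI T L g x))^2"
proof -
  have "(1 * (beta / (4 * lam)))^2 \<le> (\<Sum>k<T. (gI T L g x k)^2)"
    unfolding gI_def
  proof (rule ch.grad_lower[where x=x, OF lam_pos T xT])
    show "psi lam z \<ge> 0" "dpsi lam z \<ge> 0" "phi lam beta z \<ge> 0" "dphi lam beta z \<ge> 0" for z
      using Psi0_bounds dPsi0_bounds lam_pos beta_pos by (auto simp: psi_def dpsi_def phi_def dphi_def)
    show "psi lam y \<ge> 1" if "y \<ge> lam" for y
      using that lam_pos by (simp add: psi_def Psi0_ge1)
    show "dphi lam beta z \<ge> beta / (4 * lam)" if "\<bar>z\<bar> < lam" for z
    proof -
      have "1/4 < z / (4 * lam) + 1/2" "z / (4 * lam) + 1/2 < 3/4"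
        using that lam_pos by (auto simp: field_simps abs_less_iff)
      then have "dPsi0 (z / (4 * lam) + 1/2) \<ge> 1" by (rule dPsi0_mid)
      then have "beta / (4 * lam) * 1 \<le> beta / (4 * lam) * dPsi0 (z / (4 * lam) + 1/2)"
        using lam_pos beta_pos by (intro mult_left_mono) auto
      then show ?thesis unfolding dphi_def by simp
    qed
  qed (use lam_pos beta_pos in auto)
  moreover have "beta / (4 * lam) = g / 4" using lam_pos by (simp add: betaI_def)
  ultimately show ?thesis by (simp add: normd_sq)
qed

lemma upper: "\<bar>gI T L g x k\<bar> \<le> 5 * g"
proof -
  have "\<bar>gI T L g x k\<bar> \<le> 2 * (1 * (beta * 2 / (4 * lam))) + 2 * (2 / lam * beta)"
    unfolding gI_def by (rule ch.grad_upper)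
  also have "\<dots> = 5 * g" using lam_pos by (simp add: betaI_def field_simps)
  finally show ?thesis .
qed

lemma zchain: "(\<And>j. j \<ge> P \<Longrightarrow> x j = 0) \<Longrightarrow> k \<ge> Suc P \<Longrightarrow> gI T L g x k = 0"
  unfolding gI_def by (rule ch.zero_chain) (auto simp: psi_def dpsi_def Psi0_0)

end



definition sup_lt :: "vecn \<Rightarrow> nat \<Rightarrow> bool" where
  "sup_lt x P \<longleftrightarrow> (\<forall>j\<ge>P. x j = 0)"

lemma delayed_cases:
  "delayed_oracle tau G t x (st, sx, False) xi = ((t, x, True), (\<lambda>_. 0))"
  "t < st + tau \<Longrightarrow> delayed_oracle tau G t x (st, sx, True) xi = ((st, sx, True), (\<lambda>_. 0))"
  "\<not> t < st + tau \<Longrightarrow> delayed_oracle tau G t x (st, sx, True) xi = ((0, (\<lambda>_. 0), False), G sx xi)"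
  by (simp_all add: delayed_oracle_def)

locale proto =
  fixes n d :: nat and A :: algo and tau :: "nat \<Rightarrow> real" and G :: "vecn \<Rightarrow> real \<Rightarrow> vecn"
  assumes alg: "is_algorithm n d A" and zr: "zero_respecting d A"
    and Gv: "\<And>x xi. x \<in> vecd d \<Longrightarrow> G x xi \<in> vecd d"
begin

abbreviation "pr \<omega> k \<equiv> protocol_run A tau G \<omega> k"
abbreviation "gsq \<omega> k \<equiv> fst (pr \<omega> k)"
abbreviation "stt \<omega> k \<equiv> snd (pr \<omega> k)"

lemma pr_step:
  assumes "A (gsq \<omega> k) = (t, i, x)" "delayed_oracle (tau i) G t x (stt \<omega> k i) (\<omega> (i, Suc k)) = (s', g)"
  shows "pr \<omega> (Suc k) = (gsq \<omega> k @ [g], (stt \<omega> k)(i := s'))"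
  using assms by (simp add: case_prod_beta)

lemma alg_out: "set gs \<subseteq> vecd d \<Longrightarrow> fst (A gs) \<ge> 0 \<and> fst (snd (A gs)) \<in> {1..n} \<and> snd (snd (A gs)) \<in> vecd d"
  using alg unfolding is_algorithm_def by blast

lemma alg_mono: "set gs \<subseteq> vecd d \<Longrightarrow> g \<in> vecd d \<Longrightarrow> fst (A (gs @ [g])) \<ge> fst (A gs)"
  using alg unfolding is_algorithm_def by blast

lemma zero_vecd: "(\<lambda>_. 0) \<in> vecd d" by (simp add: vecd_def)

lemma inv_vecd: "set (gsq \<omega> k) \<subseteq> vecd d \<and> length (gsq \<omega> k) = k \<and>
    (\<forall>i. snd (snd (stt \<omega> k i)) \<longrightarrow> fst (snd (stt \<omega> k i)) \<in> vecd d)"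
proof (induction k)
  case 0 then show ?case by simp
next
  case (Suc k)
  let ?gs = "gsq \<omega> k" and ?s = "stt \<omega> k"
  obtain t i x where Ax: "A ?gs = (t, i, x)" by (cases "A ?gs") auto
  have x: "x \<in> vecd d" using alg_out[of ?gs] Suc Ax by auto
  obtain st sx sq where s: "?s i = (st, sx, sq)" by (cases "?s i") auto
  have sx: "sq \<Longrightarrow> sx \<in> vecd d" using Suc s by (metis fst_conv snd_conv)
  obtain s' g where D: "delayed_oracle (tau i) G t x (?s i) (\<omega> (i, Suc k)) = (s', g)" by (cases "delayed_oracle (tau i) G t x (?s i) (\<omega> (i, Suc k))") auto
  have P: "pr \<omega> (Suc k) = (?gs @ [g], ?s(i := s'))" by (rule pr_step[OF Ax D])
  have gs': "g \<in> vecd d \<and> (snd (snd s') \<longrightarrow> fst (snd s') \<in> vecd d)"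
  proof (cases sq)
    case False
    then show ?thesis using D x s by (auto simp: delayed_cases zero_vecd)
  next
    case True
    then show ?thesis using D x sx Gv by (cases "t < st + tau i") (auto simp: delayed_cases zero_vecd s)
  qed
  show ?case using Suc gs' unfolding P by (auto simp del: protocol_run.simps)
qed

lemma grads_vecd: "set (grads A tau G \<omega> k) \<subseteq> vecd d"
  using inv_vecd by (simp add: grads_def)

lemma time_mono_Suc: "proto_time A tau G \<omega> k \<le> proto_time A tau G \<omega> (Suc k)"
proof (cases k)
  case 0 then show ?thesis using alg_out[of "[]"] by (simp add: proto_time_def grads_def)
next
  case (Suc m)
  have "set (gsq \<omega> m) \<subseteq> vecd d" using inv_vecd by blast
  moreover have "set (gsq \<omega> (Suc m)) \<subseteq> vecd d" using inv_vecd by blast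
  moreover obtain g where "gsq \<omega> (Suc m) = gsq \<omega> m @ [g]"
    by (simp add: case_prod_beta)
  ultimately have "fst (A (gsq \<omega> m)) \<le> fst (A (gsq \<omega> (Suc m)))"
    by (auto intro!: alg_mono simp del: protocol_run.simps)
  then show ?thesis using Suc by (simp add: proto_time_def grads_def)
qed

lemma time_mono: "j \<le> k \<Longrightarrow> proto_time A tau G \<omega> j \<le> proto_time A tau G \<omega> k"
  by (induction k) (auto intro: order.trans[OF _ time_mono_Suc] simp: le_Suc_eq)

lemma time_nonneg: "proto_time A tau G \<omega> k \<ge> 0"
  using time_mono[of 0 k \<omega>] by (simp add: proto_time_def)

lemma time_Suc: "proto_time A tau G \<omega> (Suc k) = fst (A (gsq \<omega> k))"
  by (simp add: proto_time_def grads_def)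

definition compl :: "(nat \<times> nat \<Rightarrow> real) \<Rightarrow> nat \<Rightarrow> nat \<Rightarrow> bool" where
  "compl \<omega> i k' = (case k' of 0 \<Rightarrow> False | Suc k \<Rightarrow>
     fst (snd (A (gsq \<omega> k))) = i \<and> snd (snd (stt \<omega> k i)) \<and> \<not> fst (A (gsq \<omega> k)) < fst (stt \<omega> k i) + tau i)"

definition cnt :: "(nat \<times> nat \<Rightarrow> real) \<Rightarrow> nat \<Rightarrow> nat \<Rightarrow> nat" where
  "cnt \<omega> i k = (\<Sum>j\<in>{1..k}. if compl \<omega> i j then 1 else 0)"

lemma cnt_Suc: "cnt \<omega> i (Suc k) = cnt \<omega> i k + (if compl \<omega> i (Suc k) then 1 else 0)"
  by (simp add: cnt_def)

lemma sup_lt_mono: "sup_lt x M \<Longrightarrow> M \<le> M' \<Longrightarrow> sup_lt x M'"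
  by (auto simp: sup_lt_def)

lemma zr_sup: "set gs \<subseteq> vecd d \<Longrightarrow> (\<forall>g\<in>set gs. sup_lt g M) \<Longrightarrow> sup_lt (snd (snd (A gs))) M"
  using zr unfolding zero_respecting_def sup_lt_def by (metis)

lemma cnt_inv: "real (cnt \<omega> i k) * tau i \<le> (if snd (snd (stt \<omega> k i)) then fst (stt \<omega> k i) else proto_time A tau G \<omega> k)
   \<and> (snd (snd (stt \<omega> k i)) \<longrightarrow> fst (stt \<omega> k i) \<le> proto_time A tau G \<omega> k)"
proof (induction k arbitrary: i)
  case 0 then show ?case by (simp add: cnt_def proto_time_def)
next
  case (Suc k)
  let ?gs = "gsq \<omega> k" and ?s = "stt \<omega> k"
  obtain t i0 x where Ax: "A ?gs = (t, i0, x)" by (cases "A ?gs") auto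
  obtain st sx sq where s: "?s i0 = (st, sx, sq)" by (cases "?s i0") auto
  obtain s' g where D: "delayed_oracle (tau i0) G t x (?s i0) (\<omega> (i0, Suc k)) = (s', g)" by (cases "delayed_oracle (tau i0) G t x (?s i0) (\<omega> (i0, Suc k))") auto
  have P: "pr \<omega> (Suc k) = (?gs @ [g], ?s(i0 := s'))" by (rule pr_step[OF Ax D])
  have tS: "proto_time A tau G \<omega> (Suc k) = t" using time_Suc[of \<omega> k] Ax by simp
  have tk: "proto_time A tau G \<omega> k \<le> t" using time_mono_Suc[of \<omega> k] tS by simp
  have cS: "compl \<omega> i (Suc k) \<longleftrightarrow> i = i0 \<and> sq \<and> \<not> t < st + tau i0" using s Ax by (auto simp: compl_def)
  show ?case
  proof (cases "i = i0")
    case False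
    then have "stt \<omega> (Suc k) i = ?s i" "\<not> compl \<omega> i (Suc k)" using P cS by auto
    then show ?thesis using Suc.IH[of i] tS tk by (auto simp: cnt_Suc)
  next
    case True
    note IH = Suc.IH[of i0]
    show ?thesis
    proof (cases sq)
      case False
      then have "s' = (t, x, True)" "\<not> compl \<omega> i (Suc k)" using D s cS by (auto simp: delayed_cases)
      then show ?thesis using IH True P s False tS tk by (auto simp: cnt_Suc)
    next
      case sq: True
      show ?thesis
      proof (cases "t < st + tau i0")
        case True
        then have "s' = (st, sx, True)" "\<not> compl \<omega> i (Suc k)" using D s cS sq by (auto simp: delayed_cases)
        then show ?thesis using IH \<open>i = i0\<close> P s sq tS tk by (auto simp: cnt_Suc)
      next
        case False
        then have "s' = (0, (\<lambda>_. 0), False)" "compl \<omega> i (Suc k)" using D s cS sq \<open>i = i0\<close> by (auto simp: delayed_cases)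
        then show ?thesis using IH \<open>i = i0\<close> P s sq tS False by (auto simp: cnt_Suc algebra_simps)
      qed
    qed
  qed
qed

lemma cnt_time: "real (cnt \<omega> i k) * tau i \<le> proto_time A tau G \<omega> k"
  using cnt_inv[of \<omega> i k] by (auto split: if_splits)

end

locale proto_level = proto +
  fixes Fs :: "nat set" and \<theta> :: real
  assumes slow: "\<And>i. i \<in> {1..n} \<Longrightarrow> i \<notin> Fs \<Longrightarrow> tau i \<ge> \<theta>"
    and G1: "\<And>x P xi. x \<in> vecd d \<Longrightarrow> sup_lt x P \<Longrightarrow> sup_lt (G x xi) (Suc P)"
    and G2: "\<And>x P xi. x \<in> vecd d \<Longrightarrow> sup_lt x P \<Longrightarrow> xi \<noteq> 1 \<Longrightarrow> sup_lt (G x xi) P"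
begin

definition fsucc :: "(nat \<times> nat \<Rightarrow> real) \<Rightarrow> nat \<Rightarrow> bool" where
  "fsucc \<omega> j = (\<exists>i\<in>Fs. compl \<omega> i j \<and> \<omega> (i, j) = 1)"

definition fs :: "(nat \<times> nat \<Rightarrow> real) \<Rightarrow> nat \<Rightarrow> nat" where
  "fs \<omega> k = (\<Sum>j\<in>{1..k}. if fsucc \<omega> j then 1 else 0)"

lemma fs_Suc: "fs \<omega> (Suc k) = fs \<omega> k + (if fsucc \<omega> (Suc k) then 1 else 0)"
  by (simp add: fs_def)

definition LInv where
  "LInv \<omega> k M R sc \<longleftrightarrow> (\<forall>g\<in>set (gsq \<omega> k). sup_lt g M) \<and> M \<le> fs \<omega> k + sc \<and> real sc * \<theta> \<le> R \<and>
     R \<le> proto_time A tau G \<omega> k \<and>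
     (\<forall>i. snd (snd (stt \<omega> k i)) \<longrightarrow> sup_lt (fst (snd (stt \<omega> k i))) M \<and>
          ((\<exists>M'<M. sup_lt (fst (snd (stt \<omega> k i))) M') \<or> R \<le> fst (stt \<omega> k i)))"

lemma level_inv: "\<exists>M R sc. LInv \<omega> k M R sc"
proof (induction k)
  case 0 then show ?case by (intro exI[of _ 0]) (simp add: LInv_def fs_def proto_time_def)
next
  case (Suc k)
  then obtain M R sc where I: "LInv \<omega> k M R sc" by blast
  let ?gs = "gsq \<omega> k" and ?s = "stt \<omega> k"
  obtain t i0 x where Ax: "A ?gs = (t, i0, x)" by (cases "A ?gs") auto
  obtain st sx sq where s: "?s i0 = (st, sx, sq)" by (cases "?s i0") auto
  obtain s' g where D: "delayed_oracle (tau i0) G t x (?s i0) (\<omega> (i0, Suc k)) = (s', g)" by (cases "delayed_oracle (tau i0) G t x (?s i0) (\<omega> (i0, Suc k))") auto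
  have P: "pr \<omega> (Suc k) = (?gs @ [g], ?s(i0 := s'))" by (rule pr_step[OF Ax D])
  have tS: "proto_time A tau G \<omega> (Suc k) = t" using time_Suc[of \<omega> k] Ax by simp
  have tk: "proto_time A tau G \<omega> k \<le> t" using time_mono_Suc[of \<omega> k] tS by simp
  have gsv: "set ?gs \<subseteq> vecd d" and sv: "\<And>i. snd (snd (?s i)) \<Longrightarrow> fst (snd (?s i)) \<in> vecd d" using inv_vecd by blast+
  have i0: "i0 \<in> {1..n}" using alg_out[OF gsv] Ax by simp
  have xM: "sup_lt x M" using zr_sup[OF gsv] I Ax unfolding LInv_def by (metis snd_conv)
  have fsm: "fs \<omega> k \<le> fs \<omega> (Suc k)" by (simp add: fs_Suc)
  have cS: "compl \<omega> i0 (Suc k) \<longleftrightarrow> sq \<and> \<not> t < st + tau i0" using s Ax by (auto simp: compl_def)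
  have gsS: "gsq \<omega> (Suc k) = ?gs @ [g]" "stt \<omega> (Suc k) = ?s(i0 := s')" using P by auto
  have Iu: "(\<forall>g\<in>set ?gs. sup_lt g M)" "M \<le> fs \<omega> k + sc" "real sc * \<theta> \<le> R" "R \<le> proto_time A tau G \<omega> k"
     "\<And>i. snd (snd (?s i)) \<Longrightarrow> sup_lt (fst (snd (?s i))) M \<and> ((\<exists>M'<M. sup_lt (fst (snd (?s i))) M') \<or> R \<le> fst (?s i))"
    using I unfolding LInv_def by blast+
  have keep: "LInv \<omega> (Suc k) M R sc" if g: "sup_lt g M"
     and s'ok: "snd (snd s') \<Longrightarrow> sup_lt (fst (snd s')) M \<and> ((\<exists>M'<M. sup_lt (fst (snd s')) M') \<or> R \<le> fst s')"
  proof -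
    show ?thesis unfolding LInv_def gsS tS
      using Iu g s'ok fsm tk by (auto simp del: protocol_run.simps)
  qed
  show ?case
  proof (cases sq)
    case False
    then have "s' = (t, x, True)" "g = (\<lambda>_. 0)" using D s by (auto simp: delayed_cases)
    then show ?thesis using keep[of] xM Iu(4) tk by (intro exI) (auto intro!: keep simp: sup_lt_def)
  next
    case sq: True
    have sxv: "sx \<in> vecd d" using sv[of i0] s sq by simp
    have sxM: "sup_lt sx M" and sxc: "(\<exists>M'<M. sup_lt sx M') \<or> R \<le> st" using Iu(5)[of i0] s sq by auto
    show ?thesis
    proof (cases "t < st + tau i0")
      case True
      then have "s' = (st, sx, True)" "g = (\<lambda>_. 0)" using D s sq by (auto simp: delayed_cases)
      then show ?thesis using sxM sxc by (intro exI) (auto intro!: keep simp: sup_lt_def)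
    next
      case False
      then have s'd: "s' = (0, (\<lambda>_. 0), False)" "g = G sx (\<omega> (i0, Suc k))" using D s sq by (auto simp: delayed_cases)
      have co: "compl \<omega> i0 (Suc k)" using cS sq False by simp
      show ?thesis
      proof (cases "\<exists>M'<M. sup_lt sx M'")
        case True
        then obtain M' where M': "M' < M" "sup_lt sx M'" by blast
        have "sup_lt g M" proof - have "sup_lt g (Suc M')" using G1[OF sxv M'(2)] s'd by auto
        then show "sup_lt g M" using M'(1) sup_lt_mono[of g "Suc M'" M] by simp
        qed
        then show ?thesis using s'd by (intro exI) (auto intro!: keep)
      next
        case nM: False
        then have Rst: "R \<le> st" using sxc by blast
        show ?thesis
        proof (cases "\<omega> (i0, Suc k) = 1")
          case False
          then have "sup_lt g M" using G2[OF sxv sxM] s'd by auto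
          then show ?thesis using s'd by (intro exI) (auto intro!: keep)
        next
          case succ: True
          have gM: "sup_lt g (Suc M)" using G1[OF sxv sxM] s'd by auto
          have others: "\<And>i. i \<noteq> i0 \<Longrightarrow> snd (snd (?s i)) \<Longrightarrow> sup_lt (fst (snd (?s i))) (Suc M) \<and> (\<exists>M'<Suc M. sup_lt (fst (snd (?s i))) M')"
          proof -
            fix i assume "i \<noteq> i0" "snd (snd (?s i))"
            then have h: "sup_lt (fst (snd (?s i))) M" using Iu(5) by blast
            then show "sup_lt (fst (snd (?s i))) (Suc M) \<and> (\<exists>M'<Suc M. sup_lt (fst (snd (?s i))) M')"
              using sup_lt_mono[OF h, of "Suc M"] by auto
          qed
          have gsM: "\<forall>g'\<in>set (gsq \<omega> (Suc k)). sup_lt g' (Suc M)"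
            using Iu(1) gM gsS by (auto intro: sup_lt_mono simp del: protocol_run.simps)
          show ?thesis
          proof (cases "i0 \<in> Fs")
            case True
            then have "fsucc \<omega> (Suc k)" using co succ by (auto simp: fsucc_def)
            then have fsS: "fs \<omega> (Suc k) = fs \<omega> k + 1" by (simp add: fs_Suc)
            have "LInv \<omega> (Suc k) (Suc M) R sc"
              unfolding LInv_def using gsM fsS Iu(2,3,4) tk tS others s'd gsS
              by (auto simp del: protocol_run.simps)
            then show ?thesis by blast
          next
            case False
            then have th: "\<theta> \<le> tau i0" using slow i0 by blast
            have "real (Suc sc) * \<theta> \<le> t" using Iu(3) Rst th \<open>\<not> t < st + tau i0\<close> by (simp add: algebra_simps)
            then have "LInv \<omega> (Suc k) (Suc M) t (Suc sc)"
              unfolding LInv_def using gsM fsm Iu(2) tS others s'd gsS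
              by (auto simp del: protocol_run.simps)
            then show ?thesis by blast
          qed
        qed
      qed
    qed
  qed
qed

end




definition Dp :: "real \<Rightarrow> real measure" where
  "Dp p = measure_pmf (map_pmf (\<lambda>b. if b then 1 else 0) (bernoulli_pmf p))"

abbreviation SM :: "real \<Rightarrow> (nat \<times> nat \<Rightarrow> real) measure" where
  "SM p \<equiv> PiM UNIV (\<lambda>q. Dp p)"

lemma sample_measure_eq: "sample_measure (\<lambda>_. Dp p) = SM p"
  by (simp add: sample_measure_def)

lemma Dp_prob: "prob_space (Dp p)"
  by (simp add: Dp_def measure_pmf.prob_space_axioms)

lemma space_SM: "space (SM p) = UNIV"
  by (simp add: space_PiM Dp_def)

lemma sets_Dp: "sets (Dp p) = UNIV" by (simp add: Dp_def)

definition bits :: "(nat \<times> nat) set \<Rightarrow> (nat \<times> nat \<Rightarrow> real) \<Rightarrow> (nat \<times> nat \<Rightarrow> bool)" where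
  "bits B \<omega> = restrict (\<lambda>q. \<omega> q = 1) B"

definition rep :: "(nat \<times> nat) set \<Rightarrow> (nat \<times> nat \<Rightarrow> bool) \<Rightarrow> (nat \<times> nat \<Rightarrow> real)" where
  "rep B b = (\<lambda>q. if q \<in> B \<and> b q then 1 else 0)"

definition "binv B f \<longleftrightarrow> (\<forall>\<omega> \<omega>'. (\<forall>q\<in>B. (\<omega> q = 1) = (\<omega>' q = 1)) \<longrightarrow> f \<omega> = f \<omega>')"

lemma binv_rep: "binv B f \<Longrightarrow> f (rep B (bits B \<omega>)) = f \<omega>"
  unfolding binv_def by (erule allE[of _ "rep B (bits B \<omega>)"], erule allE[of _ \<omega>]) (auto simp: rep_def bits_def)

lemma sets_atom: "finite B \<Longrightarrow> {\<omega> \<in> space (SM p). \<forall>q\<in>B. \<omega> q \<in> X q} \<in> sets (SM p)"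
  by (intro sets.sets_Collect_finite_All sets_Collect_single) (auto simp: sets_Dp)

lemma bits_meas:
  assumes "finite B"
  shows "bits B \<in> measurable (SM p) (count_space (PiE B (\<lambda>_. UNIV)))"
proof (subst measurable_count_space_eq2)
  show "finite (PiE B (\<lambda>_. UNIV :: bool set))" using assms by (intro finite_PiE) auto
  show "bits B \<in> space (SM p) \<rightarrow> (PiE B (\<lambda>_. UNIV)) \<and>
    (\<forall>a\<in>PiE B (\<lambda>_. UNIV). bits B -` {a} \<inter> space (SM p) \<in> sets (SM p))"
  proof (intro conjI ballI)
    show "bits B \<in> space (SM p) \<rightarrow> (PiE B (\<lambda>_. UNIV))" by (auto simp: bits_def)
    fix a :: "nat \<times> nat \<Rightarrow> bool" assume a: "a \<in> PiE B (\<lambda>_. UNIV)"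
    have "bits B -` {a} \<inter> space (SM p) = {\<omega> \<in> space (SM p). \<forall>q\<in>B. \<omega> q \<in> (if a q then {1} else - {1})}"
    proof (intro set_eqI iffI)
      fix \<omega> assume "\<omega> \<in> bits B -` {a} \<inter> space (SM p)"
      then have "bits B \<omega> = a" by simp
      then have "\<forall>q\<in>B. \<omega> q \<in> (if a q then {1} else - {1})" by (auto simp: bits_def restrict_def fun_eq_iff split: if_splits)
      then show "\<omega> \<in> {\<omega> \<in> space (SM p). \<forall>q\<in>B. \<omega> q \<in> (if a q then {1} else - {1})}" by (simp add: space_SM)
    next
      fix \<omega> assume "\<omega> \<in> {\<omega> \<in> space (SM p). \<forall>q\<in>B. \<omega> q \<in> (if a q then {1} else - {1})}"
      then have h: "\<forall>q\<in>B. \<omega> q \<in> (if a q then {1} else - {1})" by simp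
      have "bits B \<omega> = a"
      proof
        fix q show "bits B \<omega> q = a q"
        proof (cases "q \<in> B")
          case True then show ?thesis using h by (auto simp: bits_def split: if_splits)
        next
          case False
          have "a \<in> extensional B" using a by (simp add: PiE_def)
          then have "a q = undefined" using False by (rule extensional_arb)
          then show ?thesis using False by (simp add: bits_def)
        qed
      qed
      then show "\<omega> \<in> bits B -` {a} \<inter> space (SM p)" by (simp add: space_SM)
    qed
    then show "bits B -` {a} \<inter> space (SM p) \<in> sets (SM p)" using sets_atom[OF assms] by simp
  qed
qed

lemma binv_meas:
  assumes "finite B" "binv B f" "\<And>\<omega>. f \<omega> \<in> space N"
  shows "f \<in> measurable (SM p) N"
proof -
  have "(\<lambda>\<omega>. f (rep B (bits B \<omega>))) \<in> measurable (SM p) N"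
    by (rule measurable_compose[OF bits_meas[OF assms(1)]]) (use assms(3) in simp)
  then show ?thesis using binv_rep[OF assms(2)] by simp
qed

lemma binv_borel: "finite B \<Longrightarrow> binv B f \<Longrightarrow> f \<in> borel_measurable (SM p)"
  by (rule binv_meas) auto

lemma binv_sets: "finite B \<Longrightarrow> binv B P \<Longrightarrow> {\<omega> \<in> space (SM p). P \<omega>} \<in> sets (SM p)"
  using binv_meas[of B P "count_space UNIV" p] by (auto simp: pred_def)

lemma PP: "product_prob_space (\<lambda>_::nat\<times>nat. Dp p)"
  by (rule product_prob_spaceI) (rule Dp_prob)

lemma emeasure_Dp1: "0 \<le> p \<Longrightarrow> p \<le> 1 \<Longrightarrow> emeasure (Dp p) {1} = ennreal p"
proof -
  assume p: "0 \<le> p" "p \<le> 1"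
  have "(\<lambda>b. if b then 1 else 0 :: real) -` {1} = {True}" by (auto split: if_splits)
  then show ?thesis using p unfolding Dp_def emeasure_map_pmf by (simp add: emeasure_pmf_single)
qed

definition Xa :: "(nat \<times> nat \<Rightarrow> bool) \<Rightarrow> nat \<times> nat \<Rightarrow> real set" where
  "Xa a q = (if a q then {1} else - {1})"

lemma atom_bits:
  assumes a: "a \<in> PiE B (\<lambda>_. UNIV)"
  shows "(\<forall>q\<in>B. \<omega> q \<in> Xa a q) \<longleftrightarrow> bits B \<omega> = a"
proof
  assume h: "\<forall>q\<in>B. \<omega> q \<in> Xa a q"
  show "bits B \<omega> = a"
  proof
    fix q show "bits B \<omega> q = a q"
    proof (cases "q \<in> B")
      case True then show ?thesis using h by (auto simp: bits_def Xa_def split: if_splits)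
    next
      case False
      have "a \<in> extensional B" using a by (simp add: PiE_def)
      then have "a q = undefined" using False by (rule extensional_arb)
      then show ?thesis using False by (simp add: bits_def)
    qed
  qed
next
  assume "bits B \<omega> = a"
  then show "\<forall>q\<in>B. \<omega> q \<in> Xa a q" by (auto simp: bits_def Xa_def restrict_def fun_eq_iff split: if_splits)
qed

lemma indep_bit:
  assumes p: "0 \<le> p" "p \<le> 1" and B: "finite B" and q0: "q0 \<notin> B" and P: "binv B P"
  shows "measure (SM p) {\<omega> \<in> space (SM p). P \<omega> \<and> \<omega> q0 = 1} = p * measure (SM p) {\<omega> \<in> space (SM p). P \<omega>}"
proof -
  interpret PP: product_prob_space "\<lambda>_::nat\<times>nat. Dp p" UNIV by (rule PP)
  define Sa where "Sa = {a \<in> PiE B (\<lambda>_. UNIV). P (rep B a)}"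
  define atom where "atom a = {\<omega> \<in> space (SM p). \<forall>q\<in>B. \<omega> q \<in> Xa a q}" for a
  define atom' where "atom' a = {\<omega> \<in> space (SM p). \<forall>q\<in>insert q0 B. \<omega> q \<in> ((Xa a)(q0 := {1})) q}" for a
  have finS: "finite Sa" unfolding Sa_def using B by (intro finite_subset[OF _ finite_PiE[of B "\<lambda>_. UNIV :: bool set"]]) auto
  have E1: "{\<omega> \<in> space (SM p). P \<omega>} = (\<Union>a\<in>Sa. atom a)"
  proof (intro set_eqI iffI)
    fix \<omega> assume "\<omega> \<in> {\<omega> \<in> space (SM p). P \<omega>}"
    then have "P \<omega>" "\<omega> \<in> space (SM p)" by auto
    moreover have "bits B \<omega> \<in> PiE B (\<lambda>_. UNIV)" by (auto simp: bits_def)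
    ultimately show "\<omega> \<in> (\<Union>a\<in>Sa. atom a)"
      using binv_rep[OF P, of \<omega>] atom_bits[of "bits B \<omega>" B \<omega>]
      by (auto simp: Sa_def atom_def intro!: bexI[of _ "bits B \<omega>"])
  next
    fix \<omega> assume "\<omega> \<in> (\<Union>a\<in>Sa. atom a)"
    then obtain a where "a \<in> Sa" "\<omega> \<in> atom a" by auto
    then show "\<omega> \<in> {\<omega> \<in> space (SM p). P \<omega>}"
      using binv_rep[OF P, of \<omega>] atom_bits[of a B \<omega>] by (auto simp: Sa_def atom_def)
  qed
  have at': "atom' a = atom a \<inter> {\<omega>. \<omega> q0 = 1}" for a
    using q0 by (auto simp: atom'_def atom_def)
  have E2: "{\<omega> \<in> space (SM p). P \<omega> \<and> \<omega> q0 = 1} = (\<Union>a\<in>Sa. atom' a)"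
    using E1 unfolding at' by auto
  have sets: "atom a \<in> sets (SM p)" "atom' a \<in> sets (SM p)" for a
  proof -
    show "atom a \<in> sets (SM p)" unfolding atom_def by (rule sets_atom[OF B])
    show "atom' a \<in> sets (SM p)" unfolding atom'_def by (rule sets_atom) (use B in simp)
  qed
  have disj: "disjoint_family_on atom Sa"
    unfolding disjoint_family_on_def
  proof (intro ballI impI)
    fix a b assume "a \<in> Sa" "b \<in> Sa" "a \<noteq> b"
    then show "atom a \<inter> atom b = {}" using atom_bits[of a B] atom_bits[of b B]
      by (auto simp: atom_def Sa_def)
  qed
  have disj': "disjoint_family_on atom' Sa"
    using disj unfolding disjoint_family_on_def at' by auto
  have em: "emeasure (SM p) (atom' a) = ennreal p * emeasure (SM p) (atom a)" for a
  proof -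
    have "emeasure (SM p) (atom' a) = (\<Prod>q\<in>insert q0 B. emeasure (Dp p) (((Xa a)(q0 := {1})) q))"
      unfolding atom'_def using B by (intro PP.emeasure_PiM_Collect) (auto simp: sets_Dp)
    also have "\<dots> = emeasure (Dp p) {1} * (\<Prod>q\<in>B. emeasure (Dp p) (if q = q0 then {1} else Xa a q))"
      using B q0 by (simp add: prod.insert)
    also have "(\<Prod>q\<in>B. emeasure (Dp p) (if q = q0 then {1} else Xa a q)) = (\<Prod>q\<in>B. emeasure (Dp p) (Xa a q))"
      by (rule prod.cong) (use q0 in auto)
    also have "(\<Prod>q\<in>B. emeasure (Dp p) (Xa a q)) = emeasure (SM p) (atom a)"
      unfolding atom_def using B by (intro PP.emeasure_PiM_Collect[symmetric]) (auto simp: sets_Dp)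
    finally show ?thesis using emeasure_Dp1[OF p] by simp
  qed
  have "emeasure (SM p) {\<omega> \<in> space (SM p). P \<omega> \<and> \<omega> q0 = 1} = (\<Sum>a\<in>Sa. emeasure (SM p) (atom' a))"
    unfolding E2 using sets disj' finS by (intro sum_emeasure[symmetric]) auto
  also have "\<dots> = ennreal p * (\<Sum>a\<in>Sa. emeasure (SM p) (atom a))"
    by (simp add: em sum_distrib_left)
  also have "(\<Sum>a\<in>Sa. emeasure (SM p) (atom a)) = emeasure (SM p) {\<omega> \<in> space (SM p). P \<omega>}"
    unfolding E1 using sets disj finS by (intro sum_emeasure) auto
  finally have "emeasure (SM p) {\<omega> \<in> space (SM p). P \<omega> \<and> \<omega> q0 = 1} = ennreal p * emeasure (SM p) {\<omega> \<in> space (SM p). P \<omega>}" .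
  then show ?thesis using p by (simp add: measure_def enn2real_mult)
qed




definition box :: "nat \<Rightarrow> nat \<Rightarrow> (nat \<times> nat) set" where
  "box n k = {1..n} \<times> {1..k}"

lemma finite_box: "finite (box n k)" by (simp add: box_def)

lemma binv_mono: "binv B f \<Longrightarrow> B \<subseteq> B' \<Longrightarrow> binv B' f"
  unfolding binv_def by blast

lemma binv_comp: "binv B f \<Longrightarrow> binv B (\<lambda>\<omega>. h (f \<omega>))"
  unfolding binv_def by metis

locale pp = proto_level n d A tau G Fs \<theta> for n d A tau G Fs \<theta> +
  fixes p t :: real and T :: nat and gf :: "vecn \<Rightarrow> vecn" and gmin :: real
  assumes Gbin: "\<And>x xi xi'. (xi = 1 \<longleftrightarrow> xi' = 1) \<Longrightarrow> G x xi = G x xi'"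
    and tau_pos: "\<And>i. i \<in> {1..n} \<Longrightarrow> tau i > 0"
    and Fs: "Fs \<subseteq> {1..n}"
    and p: "0 \<le> p" "p \<le> 1"
    and t: "t \<ge> 0" and th: "\<theta> > 0" "t / \<theta> \<le> real T / 2"
    and expb: "p * (\<Sum>i\<in>Fs. t / tau i) \<le> real T / 4"
    and T: "T > 0"
    and hard: "\<And>x. x \<in> vecd d \<Longrightarrow> x (T - 1) = 0 \<Longrightarrow> gmin \<le> (normd d (gf x))^2"
    and gmin: "gmin \<ge> 0"
begin

lemma delayed_bin: "(xi = 1 \<longleftrightarrow> xi' = 1) \<Longrightarrow> delayed_oracle ta G t' x s xi = delayed_oracle ta G t' x s xi'"
  using Gbin[of xi xi'] by (cases s) (simp add: delayed_oracle_def)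

lemma pr_local: "binv (box n k) (\<lambda>\<omega>. pr \<omega> k)"
proof (induction k)
  case 0 then show ?case by (simp add: binv_def)
next
  case (Suc k)
  show ?case unfolding binv_def
  proof (intro allI impI)
    fix \<omega> \<omega>' :: "nat \<times> nat \<Rightarrow> real" assume h: "\<forall>q\<in>box n (Suc k). (\<omega> q = 1) = (\<omega>' q = 1)"
    have "\<forall>q\<in>box n k. (\<omega> q = 1) = (\<omega>' q = 1)" using h by (auto simp: box_def)
    then have e: "pr \<omega> k = pr \<omega>' k" using Suc unfolding binv_def by blast
    obtain t' i0 x where Ax: "A (gsq \<omega> k) = (t', i0, x)" by (cases "A (gsq \<omega> k)") auto
    have gsv: "set (gsq \<omega> k) \<subseteq> vecd d" using inv_vecd by blast
    have i0: "i0 \<in> {1..n}" using alg_out[OF gsv] Ax by simp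
    then have "(\<omega> (i0, Suc k) = 1) = (\<omega>' (i0, Suc k) = 1)" using h by (auto simp: box_def)
    then have "delayed_oracle (tau i0) G t' x (stt \<omega> k i0) (\<omega> (i0, Suc k)) = delayed_oracle (tau i0) G t' x (stt \<omega> k i0) (\<omega>' (i0, Suc k))"
      by (rule delayed_bin)
    then show "pr \<omega> (Suc k) = pr \<omega>' (Suc k)" using e Ax by (simp add: case_prod_beta)
  qed
qed

lemma time_local: "binv (box n k) (\<lambda>\<omega>. proto_time A tau G \<omega> k)"
proof (cases k)
  case 0 then show ?thesis by (simp add: binv_def proto_time_def)
next
  case (Suc m)
  have "binv (box n m) (\<lambda>\<omega>. fst (A (gsq \<omega> m)))" by (rule binv_comp[OF pr_local])
  then have "binv (box n k) (\<lambda>\<omega>. fst (A (gsq \<omega> m)))" by (rule binv_mono) (auto simp: box_def Suc)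
  then show ?thesis using Suc by (simp add: proto_time_def grads_def)
qed

lemma point_local: "binv (box n k) (\<lambda>\<omega>. proto_point A tau G \<omega> k)"
  unfolding proto_point_def grads_def by (rule binv_comp[OF pr_local])

lemma compl_local: "binv (box n k) (\<lambda>\<omega>. compl \<omega> i (Suc k) \<and> proto_time A tau G \<omega> (Suc k) \<le> t)"
proof -
  have "binv (box n k) (\<lambda>\<omega>. (\<lambda>r. fst (snd (A (fst r))) = i \<and> snd (snd (snd r i)) \<and> \<not> fst (A (fst r)) < fst (snd r i) + tau i
       \<and> fst (A (fst r)) \<le> t) (pr \<omega> k))"
    by (rule binv_comp[OF pr_local])
  then show ?thesis by (simp add: compl_def time_Suc)
qed

lemma SMp: "prob_space (SM p)" by (rule prob_space_PiM) (rule Dp_prob)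

lemma int_if:
  assumes "finite B" "binv B P"
  shows "integrable (SM p) (\<lambda>\<omega>. if P \<omega> then 1 else 0 :: real)"
    "integral\<^sup>L (SM p) (\<lambda>\<omega>. if P \<omega> then 1 else 0 :: real) = measure (SM p) {\<omega> \<in> space (SM p). P \<omega>}"
proof -
  interpret S: prob_space "SM p" by (rule SMp)
  have st: "{\<omega> \<in> space (SM p). P \<omega>} \<in> sets (SM p)" by (rule binv_sets[OF assms])
  have e: "(\<lambda>\<omega>. if P \<omega> then 1 else 0 :: real) = indicator {\<omega> \<in> space (SM p). P \<omega>}"
    by (auto simp: indicator_def space_SM)
  show "integrable (SM p) (\<lambda>\<omega>. if P \<omega> then 1 else 0 :: real)" unfolding e using st by (intro integrable_real_indicator) (auto simp: S.emeasure_eq_measure)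
  show "integral\<^sup>L (SM p) (\<lambda>\<omega>. if P \<omega> then 1 else 0 :: real) = measure (SM p) {\<omega> \<in> space (SM p). P \<omega>}"
    unfolding e using st by simp
qed

definition Cev :: "(nat \<times> nat \<Rightarrow> real) \<Rightarrow> nat \<Rightarrow> nat \<Rightarrow> bool" where
  "Cev \<omega> i k = (compl \<omega> i (Suc k) \<and> proto_time A tau G \<omega> (Suc k) \<le> t)"

definition EK :: "(nat \<times> nat \<Rightarrow> real) \<Rightarrow> nat \<Rightarrow> real" where
  "EK \<omega> K = (\<Sum>k<K. \<Sum>i\<in>Fs. if Cev \<omega> i k \<and> \<omega> (i, Suc k) = 1 then 1 else 0)"

definition rc :: "(nat \<times> nat \<Rightarrow> real) \<Rightarrow> nat \<Rightarrow> nat \<Rightarrow> real" where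
  "rc \<omega> i K = (\<Sum>k<K. if Cev \<omega> i k then 1 else 0)"

lemma finFs: "finite Fs" using Fs finite_subset by blast

lemma Cev_local: "binv (box n k) (\<lambda>\<omega>. Cev \<omega> i k)"
  unfolding Cev_def by (rule compl_local)

lemma Cev_local2: "binv (box n (Suc k)) (\<lambda>\<omega>. Cev \<omega> i k \<and> \<omega> (i, Suc k) = 1)"
proof -
  have a: "binv (box n (Suc k)) (\<lambda>\<omega>. Cev \<omega> i k)" by (rule binv_mono[OF Cev_local]) (auto simp: box_def)
  show ?thesis
  proof (cases "i \<in> {1..n}")
    case True
    then have "(i, Suc k) \<in> box n (Suc k)" by (simp add: box_def)
    then show ?thesis using a unfolding binv_def by metis
  next
    case False
    have "\<not> Cev \<omega> i k" for \<omega>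
    proof
      assume "Cev \<omega> i k"
      then have "fst (snd (A (gsq \<omega> k))) = i" by (simp add: Cev_def compl_def)
      moreover have "set (gsq \<omega> k) \<subseteq> vecd d" using inv_vecd by blast
      ultimately show False using alg_out False by fastforce
    qed
    then show ?thesis by (simp add: binv_def)
  qed
qed

lemma int_C: "i \<in> Fs \<Longrightarrow> integral\<^sup>L (SM p) (\<lambda>\<omega>. if Cev \<omega> i k \<and> \<omega> (i, Suc k) = 1 then 1 else 0 :: real)
   = p * integral\<^sup>L (SM p) (\<lambda>\<omega>. if Cev \<omega> i k then 1 else 0 :: real)"
proof -
  have "(i, Suc k) \<notin> box n k" by (simp add: box_def)
  then show ?thesis
    using int_if(2)[OF finite_box Cev_local2] int_if(2)[OF finite_box Cev_local]
      indep_bit[OF p finite_box _ Cev_local, of "(i, Suc k)"] by simp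
qed

lemma cnt_alt: "real (cnt \<omega> i K) = (\<Sum>k<K. if compl \<omega> i (Suc k) then 1 else 0)"
  by (induction K) (simp_all add: cnt_def cnt_Suc)

lemma rc_eq: "proto_time A tau G \<omega> K \<le> t \<Longrightarrow> rc \<omega> i K = real (cnt \<omega> i K)"
  unfolding rc_def cnt_alt Cev_def
proof (intro sum.cong refl)
  fix k assume "proto_time A tau G \<omega> K \<le> t" "k \<in> {..<K}"
  then have "proto_time A tau G \<omega> (Suc k) \<le> t" using time_mono[of "Suc k" K \<omega>] by auto
  then show "(if compl \<omega> i (Suc k) \<and> proto_time A tau G \<omega> (Suc k) \<le> t then 1 else 0) = (if compl \<omega> i (Suc k) then 1 else (0::real))"
    by simp
qed

lemma rc_bound: "i \<in> {1..n} \<Longrightarrow> rc \<omega> i K * tau i \<le> t"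
proof (induction K)
  case 0 then show ?case using t by (simp add: rc_def)
next
  case (Suc K)
  show ?case
  proof (cases "proto_time A tau G \<omega> (Suc K) \<le> t")
    case True
    then show ?thesis using rc_eq[OF True] cnt_time[of \<omega> i "Suc K"] by simp
  next
    case False
    then have "rc \<omega> i (Suc K) = rc \<omega> i K" by (simp add: rc_def Cev_def)
    then show ?thesis using Suc by simp
  qed
qed

lemma EK_integrable: "integrable (SM p) (\<lambda>\<omega>. EK \<omega> K)"
  unfolding EK_def using int_if(1)[OF finite_box Cev_local2]
  by (intro Bochner_Integration.integrable_sum) auto

lemma EK_int: "integral\<^sup>L (SM p) (\<lambda>\<omega>. EK \<omega> K) \<le> real T / 4"
proof -
  interpret S: prob_space "SM p" by (rule SMp)
  have ii: "integrable (SM p) (\<lambda>\<omega>. if Cev \<omega> i k then 1 else 0 :: real)" for i k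
    by (rule int_if(1)[OF finite_box Cev_local])
  have "integral\<^sup>L (SM p) (\<lambda>\<omega>. EK \<omega> K) = (\<Sum>k<K. \<Sum>i\<in>Fs. integral\<^sup>L (SM p) (\<lambda>\<omega>. if Cev \<omega> i k \<and> \<omega> (i, Suc k) = 1 then 1 else 0 :: real))"
    unfolding EK_def using int_if(1)[OF finite_box Cev_local2]
    by (simp add: Bochner_Integration.integral_sum Bochner_Integration.integrable_sum)
  also have "\<dots> = p * (\<Sum>k<K. \<Sum>i\<in>Fs. integral\<^sup>L (SM p) (\<lambda>\<omega>. if Cev \<omega> i k then 1 else 0 :: real))"
    by (simp add: int_C sum_distrib_left)
  also have "(\<Sum>k<K. \<Sum>i\<in>Fs. integral\<^sup>L (SM p) (\<lambda>\<omega>. if Cev \<omega> i k then 1 else 0 :: real)) = integral\<^sup>L (SM p) (\<lambda>\<omega>. \<Sum>i\<in>Fs. rc \<omega> i K)"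
    unfolding rc_def using ii
    by (simp add: Bochner_Integration.integral_sum Bochner_Integration.integrable_sum sum.swap[of _ "{..<K}" Fs])
  also have "\<dots> \<le> integral\<^sup>L (SM p) (\<lambda>\<omega>. \<Sum>i\<in>Fs. t / tau i)"
  proof (rule integral_mono)
    show "integrable (SM p) (\<lambda>\<omega>. \<Sum>i\<in>Fs. rc \<omega> i K)" unfolding rc_def using ii
      by (intro Bochner_Integration.integrable_sum) auto
    show "integrable (SM p) (\<lambda>\<omega>. \<Sum>i\<in>Fs. t / tau i)" by simp
    fix \<omega> show "(\<Sum>i\<in>Fs. rc \<omega> i K) \<le> (\<Sum>i\<in>Fs. t / tau i)"
    proof (rule sum_mono)
      fix i assume "i \<in> Fs"
      then have i: "i \<in> {1..n}" using Fs by auto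
      then show "rc \<omega> i K \<le> t / tau i" using rc_bound[OF i, of \<omega> K] tau_pos[OF i] by (simp add: field_simps)
    qed
  qed
  also have "\<dots> = (\<Sum>i\<in>Fs. t / tau i)" using S.prob_space by simp
  finally show ?thesis using expb p by (smt (verit) mult_left_mono)
qed

definition bad :: "nat \<Rightarrow> (nat \<times> nat \<Rightarrow> real) set" where
  "bad K = {\<omega> \<in> space (SM p). EK \<omega> K \<ge> real T / 2}"

lemma EK_local: "binv (box n K) (\<lambda>\<omega>. EK \<omega> K)"
proof -
  have "binv (box n K) (\<lambda>\<omega>. Cev \<omega> i k \<and> \<omega> (i, Suc k) = 1)" if "k < K" for i k
    by (rule binv_mono[OF Cev_local2]) (use that in \<open>auto simp: box_def\<close>)
  then have pw: "\<And>\<omega> \<omega>' k i. (\<forall>q\<in>box n K. (\<omega> q = 1) = (\<omega>' q = 1)) \<Longrightarrow> k < K \<Longrightarrow>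
      (Cev \<omega> i k \<and> \<omega> (i, Suc k) = 1) = (Cev \<omega>' i k \<and> \<omega>' (i, Suc k) = 1)"
    unfolding binv_def by blast
  show ?thesis unfolding binv_def EK_def
  proof (intro allI impI)
    fix \<omega> \<omega>' :: "nat \<times> nat \<Rightarrow> real" assume e: "\<forall>q\<in>box n K. (\<omega> q = 1) = (\<omega>' q = 1)"
    show "(\<Sum>k<K. \<Sum>i\<in>Fs. if Cev \<omega> i k \<and> \<omega> (i, Suc k) = 1 then 1 else 0) = (\<Sum>k<K. \<Sum>i\<in>Fs. if Cev \<omega>' i k \<and> \<omega>' (i, Suc k) = 1 then 1 else (0::real))"
    proof (rule sum.cong[OF refl], rule sum.cong[OF refl])
      fix k i assume "k \<in> {..<K}"
      then have "(Cev \<omega> i k \<and> \<omega> (i, Suc k) = 1) = (Cev \<omega>' i k \<and> \<omega>' (i, Suc k) = 1)" using pw[OF e] by simp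
      then show "(if Cev \<omega> i k \<and> \<omega> (i, Suc k) = 1 then 1 else 0) = (if Cev \<omega>' i k \<and> \<omega>' (i, Suc k) = 1 then 1 else (0::real))"
        by simp
    qed
  qed
qed

lemma bad_sets: "bad K \<in> sets (SM p)"
  unfolding bad_def by (rule binv_sets[OF finite_box]) (rule binv_comp[OF EK_local])

lemma EK_nonneg: "EK \<omega> K \<ge> 0" by (simp add: EK_def sum_nonneg)

lemma EK_mono: "K \<le> K' \<Longrightarrow> EK \<omega> K \<le> EK \<omega> K'"
  unfolding EK_def by (rule sum_mono2) (auto intro: sum_nonneg)

lemma bad_meas: "measure (SM p) (bad K) \<le> 1 / 2"
proof -
  interpret S: prob_space "SM p" by (rule SMp)
  have "measure (SM p) {\<omega> \<in> space (SM p). EK \<omega> K \<ge> real T / 2} \<le> integral\<^sup>L (SM p) (\<lambda>\<omega>. EK \<omega> K) / (real T / 2)"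
    by (rule integral_Markov_inequality_measure[OF EK_integrable, where A="space (SM p)"]) (use T EK_nonneg in auto)
  also have "\<dots> \<le> (real T / 4) / (real T / 2)" using EK_int T by (intro divide_right_mono) auto
  also have "\<dots> = 1 / 2" using T by simp
  finally show ?thesis by (simp add: bad_def)
qed

lemma bad_union: "measure (SM p) (\<Union>K. bad K) \<le> 1 / 2"
proof -
  interpret S: prob_space "SM p" by (rule SMp)
  have inc: "incseq bad"
    unfolding incseq_def bad_def using EK_mono by (auto intro: order.trans)
  have "(\<lambda>K. measure (SM p) (bad K)) \<longlonglongrightarrow> measure (SM p) (\<Union>K. bad K)"
    by (rule S.finite_Lim_measure_incseq) (use bad_sets inc in auto)
  then show ?thesis by (rule LIMSEQ_le_const2) (use bad_meas in auto)
qed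

definition fk :: "(nat \<times> nat \<Rightarrow> real) \<Rightarrow> nat \<Rightarrow> real" where
  "fk \<omega> k = (normd d (gf (proto_point A tau G \<omega> k)))^2"

lemma fs_alt: "real (fs \<omega> K) = (\<Sum>k<K. if fsucc \<omega> (Suc k) then 1 else 0)"
  by (induction K) (simp_all add: fs_def fs_Suc)

lemma good_lower:
  assumes good: "\<omega> \<notin> (\<Union>K. bad K)" and k: "proto_time A tau G \<omega> k \<le> t"
  shows "gmin \<le> fk \<omega> k"
proof -
  obtain M R sc where I: "LInv \<omega> k M R sc" using level_inv by blast
  have "\<not> (real T / 2 \<le> EK \<omega> k)" using good by (auto simp: bad_def space_SM)
  then have EKk: "EK \<omega> k < real T / 2" by linarith
  have fsle: "real (fs \<omega> k) \<le> EK \<omega> k"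
    unfolding fs_alt EK_def
  proof (rule sum_mono)
    fix j assume j: "j \<in> {..<k}"
    show "(if fsucc \<omega> (Suc j) then 1 else 0) \<le> (\<Sum>i\<in>Fs. if Cev \<omega> i j \<and> \<omega> (i, Suc j) = 1 then 1 else (0::real))"
    proof (cases "fsucc \<omega> (Suc j)")
      case True
      then obtain i where i: "i \<in> Fs" "compl \<omega> i (Suc j)" "\<omega> (i, Suc j) = 1" by (auto simp: fsucc_def)
      have "proto_time A tau G \<omega> (Suc j) \<le> t" using time_mono[of "Suc j" k \<omega>] j k by auto
      then have "Cev \<omega> i j" using i by (simp add: Cev_def)
      then have "(if Cev \<omega> i j \<and> \<omega> (i, Suc j) = 1 then 1 else 0) \<le> (\<Sum>i\<in>Fs. if Cev \<omega> i j \<and> \<omega> (i, Suc j) = 1 then 1 else (0::real))"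
        using i finFs by (intro member_le_sum) auto
      then show ?thesis using True i \<open>Cev \<omega> i j\<close> by simp
    qed (auto intro: sum_nonneg)
  qed
  have Iu: "\<forall>g\<in>set (gsq \<omega> k). sup_lt g M" "M \<le> fs \<omega> k + sc" "real sc * \<theta> \<le> R" "R \<le> proto_time A tau G \<omega> k"
    using I unfolding LInv_def by blast+
  have "real sc * \<theta> \<le> t" using Iu k by linarith
  then have "real sc \<le> t / \<theta>" using th by (simp add: field_simps)
  then have scT: "real sc \<le> real T / 2" using th by linarith
  have "real M \<le> real (fs \<omega> k) + real sc" using Iu(2) by linarith
  then have MT: "M < T" using fsle EKk scT by linarith
  have gsv: "set (gsq \<omega> k) \<subseteq> vecd d" using inv_vecd by blast
  have xs: "sup_lt (proto_point A tau G \<omega> k) M"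
    unfolding proto_point_def grads_def by (rule zr_sup[OF gsv Iu(1)])
  have xv: "proto_point A tau G \<omega> k \<in> vecd d"
    unfolding proto_point_def grads_def using alg_out[OF gsv] by simp
  have "proto_point A tau G \<omega> k (T - 1) = 0" using xs MT by (auto simp: sup_lt_def)
  then show ?thesis unfolding fk_def by (rule hard[OF xv])
qed

definition hI :: "(nat \<times> nat \<Rightarrow> real) \<Rightarrow> real" where
  "hI \<omega> = (INF k\<in>S_set A tau G \<omega> t. fk \<omega> k)"

lemma fk_local: "binv (box n k) (\<lambda>\<omega>. fk \<omega> k)"
  unfolding fk_def by (rule binv_comp[OF point_local])

lemma fk0: "fk \<omega> 0 = fk \<omega>' 0"
  using fk_local[of 0] by (simp add: binv_def box_def)

lemma zero_S: "0 \<in> S_set A tau G \<omega> t"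
  using t by (simp add: S_set_def proto_time_def)

lemma fk_nonneg: "fk \<omega> k \<ge> 0" by (simp add: fk_def)

lemma hI_alt: "hI \<omega> = (INF k. (if proto_time A tau G \<omega> k \<le> t then fk \<omega> k else fk \<omega> 0))"
proof -
  have "(\<lambda>k. (if proto_time A tau G \<omega> k \<le> t then fk \<omega> k else fk \<omega> 0)) ` UNIV = (\<lambda>k. fk \<omega> k) ` S_set A tau G \<omega> t"
    using zero_S[of \<omega>] by (auto simp: S_set_def image_iff)
  then show ?thesis unfolding hI_def by simp
qed

lemma hI_meas: "hI \<in> borel_measurable (SM p)"
proof -
  have "(\<lambda>\<omega>. INF k. (if proto_time A tau G \<omega> k \<le> t then fk \<omega> k else fk \<omega> 0)) \<in> borel_measurable (SM p)"
  proof (rule borel_measurable_cINF_real)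
    fix k :: nat
    have a: "binv (box n k) (\<lambda>\<omega>. fk \<omega> 0)" by (rule binv_mono[OF fk_local]) (auto simp: box_def)
    have "binv (box n k) (\<lambda>\<omega>. (if proto_time A tau G \<omega> k \<le> t then fk \<omega> k else fk \<omega> 0))"
      unfolding binv_def
    proof (intro allI impI)
      fix \<omega> \<omega>' :: "nat \<times> nat \<Rightarrow> real" assume e: "\<forall>q\<in>box n k. (\<omega> q = 1) = (\<omega>' q = 1)"
      have "proto_time A tau G \<omega> k = proto_time A tau G \<omega>' k" "fk \<omega> k = fk \<omega>' k" "fk \<omega> 0 = fk \<omega>' 0"
        using time_local[of k] fk_local[of k] a e unfolding binv_def by blast+
      then show "(if proto_time A tau G \<omega> k \<le> t then fk \<omega> k else fk \<omega> 0) = (if proto_time A tau G \<omega>' k \<le> t then fk \<omega>' k else fk \<omega>' 0)"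
        by simp
    qed
    then show "(\<lambda>\<omega>. (if proto_time A tau G \<omega> k \<le> t then fk \<omega> k else fk \<omega> 0)) \<in> borel_measurable (SM p)"
      by (rule binv_borel[OF finite_box])
  qed simp
  then show ?thesis using hI_alt by presburger
qed

lemma hI_bounds: "0 \<le> hI \<omega>" "hI \<omega> \<le> fk \<omega> 0"
proof -
  show "0 \<le> hI \<omega>" unfolding hI_def using zero_S[of \<omega>] fk_nonneg by (intro cINF_greatest) auto
  show "hI \<omega> \<le> fk \<omega> 0" unfolding hI_def using zero_S[of \<omega>] fk_nonneg
    by (intro cINF_lower) (auto intro!: bdd_belowI[of _ 0])
qed

theorem main_prob: "integral\<^sup>L (SM p) hI \<ge> gmin / 2"
proof -
  interpret S: prob_space "SM p" by (rule SMp)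
  let ?U = "\<Union>K. bad K"
  have Us: "?U \<in> sets (SM p)" using bad_sets by auto
  have intH: "integrable (SM p) hI"
  proof (rule S.integrable_const_bound[where B="fk (\<lambda>_. 0) 0"])
    show "AE x in SM p. norm (hI x) \<le> fk (\<lambda>_. 0) 0"
    proof (rule AE_I2)
      fix x
      have "hI x \<le> fk (\<lambda>_. 0) 0" using hI_bounds(2)[of x] fk0[of x "\<lambda>_. 0"] by simp
      then show "norm (hI x) \<le> fk (\<lambda>_. 0) 0" using hI_bounds(1)[of x] by simp
    qed
  qed (rule hI_meas)
  have intL: "integrable (SM p) (\<lambda>\<omega>. gmin * indicator (space (SM p) - ?U) \<omega>)"
    using Us by (intro integrable_mult_right integrable_real_indicator) (auto simp: S.emeasure_eq_measure)
  have m1: "integral\<^sup>L (SM p) (\<lambda>\<omega>. gmin * indicator (space (SM p) - ?U) \<omega>) \<le> integral\<^sup>L (SM p) hI"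
  proof (rule integral_mono[OF intL intH])
    fix \<omega> assume "\<omega> \<in> space (SM p)"
    show "gmin * indicator (space (SM p) - ?U) \<omega> \<le> hI \<omega>"
    proof (cases "\<omega> \<in> ?U")
      case True then show ?thesis using hI_bounds[of \<omega>] by simp
    next
      case False
      have "gmin \<le> hI \<omega>" unfolding hI_def using zero_S[of \<omega>] good_lower[OF False]
        by (intro cINF_greatest) (auto simp: S_set_def)
      then show ?thesis using False \<open>\<omega> \<in> space (SM p)\<close> by simp
    qed
  qed
  have m2: "integral\<^sup>L (SM p) (\<lambda>\<omega>. gmin * indicator (space (SM p) - ?U) \<omega>) = gmin * measure (SM p) (space (SM p) - ?U)"
  proof -
    have "(space (SM p) - ?U) \<inter> space (SM p) = space (SM p) - ?U" by blast
    then show ?thesis using Us by simp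
  qed
  have m3: "measure (SM p) (space (SM p) - ?U) \<ge> 1 / 2"
    using S.prob_compl[OF Us] bad_union by simp
  have m4: "gmin * (1/2) \<le> gmin * measure (SM p) (space (SM p) - ?U)"
    using gmin m3 by (intro mult_left_mono) auto
  from m1 m2 m4 show ?thesis by linarith
qed

end



lemma arith_main:
  fixes m0 Q T H t c p s e :: real
  assumes Q: "Q > 0" and e: "e > 0" and s: "s > 0" and c: "c = 1 / (12800 * 21504)"
    and T: "T \<ge> Q / 21504" and m0: "m0 \<ge> 0"
    and up: "t * H \<le> c * (m0 * Q + s * Q / e)" and low: "m0 * T / 2 \<le> t * H"
    and p0: "p \<ge> 0" and p1: "p \<le> 1600 * e / s"
  shows "p * (t * H) \<le> T / 4"
proof -
  define A :: real where "A = 21504"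
  have A: "A > 0" "c = 1 / (12800 * A)" using c by (simp_all add: A_def)
  have "m0 * (Q / A) / 2 \<le> m0 * T / 2" using T m0 unfolding A_def by (intro divide_right_mono mult_left_mono) auto
  then have "m0 * (Q / A) / 2 \<le> c * (m0 * Q + s * Q / e)" using low up by linarith
  then have "Q * (m0 / (2 * A)) \<le> Q * (c * m0 + c * s / e)" by (simp add: field_simps)
  then have h1: "m0 / (2 * A) \<le> c * m0 + c * s / e" using Q by (rule mult_left_le_imp_le)
  have "c * m0 = m0 / (12800 * A)" using A by simp
  also have "\<dots> \<le> m0 / (4 * A)" using A m0 by (intro divide_left_mono) auto
  finally have "c * m0 \<le> m0 / (4 * A)" .
  moreover have "m0 / (2 * A) = 2 * (m0 / (4 * A))" by simp
  ultimately have h2: "m0 / (4 * A) \<le> c * s / e" using h1 by linarith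
  have "m0 = 4 * A * (m0 / (4 * A))" using A by simp
  also have "\<dots> \<le> 4 * A * (c * s / e)" using h2 A by (intro mult_left_mono) auto
  also have "\<dots> = s / (3200 * e)" unfolding A(2) using A(1) e by (simp add: field_simps)
  finally have m0b: "m0 \<le> s / (3200 * e)" .
  have pm: "p * m0 \<le> 1 / 2"
  proof -
    have "p * m0 \<le> (1600 * e / s) * (s / (3200 * e))" using p0 p1 m0 m0b by (intro mult_mono) auto
    also have "\<dots> = 1 / 2" using e s by (simp add: field_simps)
    finally show ?thesis .
  qed
  have ps: "p * (s / e) \<le> 1600"
  proof -
    have "p * (s / e) \<le> (1600 * e / s) * (s / e)" using p1 s e by (intro mult_right_mono) auto
    also have "\<dots> = 1600" using e s by (simp add: field_simps)
    finally show ?thesis .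
  qed
  have "p * (t * H) \<le> p * (c * (m0 * Q + s * Q / e))" using up p0 by (rule mult_left_mono)
  also have "\<dots> = c * Q * (p * m0 + p * (s / e))" by (simp add: algebra_simps)
  also have "\<dots> \<le> c * Q * (1/2 + 1600)"
  proof (rule mult_left_mono)
    show "p * m0 + p * (s / e) \<le> 1/2 + 1600" using pm ps by linarith
    show "0 \<le> c * Q" using A Q by simp
  qed
  also have "\<dots> \<le> (Q / A) / 4" using A Q by (simp add: field_simps)
  also have "\<dots> \<le> T / 4" using T unfolding A_def by simp
  finally show ?thesis .
qed

lemma set_pmf_Dp_finite: "finite (set_pmf (map_pmf (\<lambda>b. if b then 1 else 0 :: real) (bernoulli_pmf p)))"
  by simp

lemma Dp_integrable: "integrable (Dp p) (f :: real \<Rightarrow> real)"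
  unfolding Dp_def by (rule integrable_measure_pmf_finite) simp

lemma Dp_integral: "0 \<le> p \<Longrightarrow> p \<le> 1 \<Longrightarrow> integral\<^sup>L (Dp p) (f :: real \<Rightarrow> real) = f 1 * p + f 0 * (1 - p)"
  unfolding Dp_def by simp




definition progx :: "vecn \<Rightarrow> nat" where "progx x = (LEAST P. sup_lt x P)"

definition Gh :: "nat \<Rightarrow> real \<Rightarrow> real \<Rightarrow> real \<Rightarrow> vecn \<Rightarrow> real \<Rightarrow> vecn" where
  "Gh T L g p x xi j = (if j = progx x then (if xi = 1 then gI T L g x j / p else 0) else gI T L g x j)"

lemma progx: "x \<in> vecd T \<Longrightarrow> sup_lt x (progx x) \<and> progx x \<le> T"
proof -
  assume "x \<in> vecd T"
  then have h: "sup_lt x T" by (simp add: vecd_def sup_lt_def)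
  show ?thesis unfolding progx_def using LeastI[of "sup_lt x", OF h] Least_le[of "sup_lt x", OF h] by simp
qed

lemma progx_le: "sup_lt x P \<Longrightarrow> progx x \<le> P"
  unfolding progx_def by (rule Least_le)

lemma down_interval:
  assumes "finite F" "\<And>i j. i \<in> F \<Longrightarrow> 1 \<le> j \<Longrightarrow> j \<le> i \<Longrightarrow> j \<in> F" "\<And>i. i \<in> F \<Longrightarrow> 1 \<le> i"
  shows "F = {1..card F}"
proof (cases "F = {}")
  case True then show ?thesis by simp
next
  case False
  define m where "m = Max F"
  have "F = {1..m}"
  proof
    show "F \<subseteq> {1..m}" using assms(1,3) by (auto simp: m_def)
    show "{1..m} \<subseteq> F" using assms(2)[of m] Max_in[OF assms(1) False] by (auto simp: m_def)
  qed
  then show ?thesis by simp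
qed

lemma var_arith:
  fixes g0 p K s :: real
  assumes p: "0 < p" "p \<le> 1" and g: "g0^2 \<le> K" and ps: "p = 1 \<or> p = K / s" and s: "s > 0"
  shows "(g0 / p - g0)^2 * p + g0^2 * (1 - p) \<le> s"
proof -
  have eq: "(g0 / p - g0)^2 * p + g0^2 * (1 - p) = g0^2 * (1 - p) / p"
    using p by (simp add: field_simps power2_eq_square)
  show ?thesis
  proof (cases "p = 1")
    case True then show ?thesis using eq s by simp
  next
    case False
    then have pK: "p = K / s" using ps by simp
    have "g0^2 * (1 - p) / p \<le> g0^2 / p" using p by (intro divide_right_mono) (auto simp: mult_left_le)
    also have "\<dots> \<le> K / p" using g p by (intro divide_right_mono) auto
    also have "\<dots> = s" using pK p s by (auto simp: field_simps)
    finally show ?thesis using eq by simp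
  qed
qed




theorem mainTheorem1:
  shows "\<exists>c>0. \<exists>c'>0. \<forall>(n::nat) (sigma2::real) (tau::nat \<Rightarrow> real) (L::real) (Delta::real)
            (eps::real) (A::nat \<Rightarrow> algo).
     n \<ge> 1 \<longrightarrow> sigma2 > 0 \<longrightarrow> 0 < tau 1 \<longrightarrow>
     (\<forall>i j. 1 \<le> i \<longrightarrow> i \<le> j \<longrightarrow> j \<le> n \<longrightarrow> tau i \<le> tau j) \<longrightarrow>
     L > 0 \<longrightarrow> Delta > 0 \<longrightarrow> 0 < eps \<longrightarrow> eps \<le> c' * L * Delta \<longrightarrow>
     (\<forall>d. is_algorithm n d (A d) \<and> zero_respecting d (A d)) \<longrightarrow>
     (\<exists>(d::nat) (f::vecn \<Rightarrow> real) (gf::vecn \<Rightarrow> vecn) (D::nat \<Rightarrow> real measure)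
         (G::vecn \<Rightarrow> real \<Rightarrow> vecn).
        in_FDL d Delta L f gf \<and> admissible_oracles n d sigma2 gf D G \<and>
        (let t = c * Min ((\<lambda>m. (real m / (\<Sum>i=1..m. 1 / tau i)) *
                              (L * Delta / eps + sigma2 * L * Delta / (real m * eps^2))) ` {1..n})
         in (\<integral>\<omega>. (INF k\<in>S_set (A d) tau G \<omega> t. (normd d (gf (proto_point (A d) tau G \<omega> k)))^2)
               \<partial>sample_measure D) > eps))"
proof (rule exI[of _ "1 / (12800 * 21504) :: real"], rule conjI, simp, rule exI[of _ "1 / 10752 :: real"], rule conjI, simp, intro allI impI)
  fix n :: nat and sigma2 :: real and tau :: "nat \<Rightarrow> real" and L Delta eps :: real and A :: "nat \<Rightarrow> algo"
  assume n: "n \<ge> 1" and s: "sigma2 > 0" and t1: "0 < tau 1"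
    and sorted: "\<forall>i j. 1 \<le> i \<longrightarrow> i \<le> j \<longrightarrow> j \<le> n \<longrightarrow> tau i \<le> tau j"
    and L: "L > 0" and Dl: "Delta > 0" and e: "0 < eps" and ec: "eps \<le> 1 / 10752 * L * Delta"
    and alg: "\<forall>d. is_algorithm n d (A d) \<and> zero_respecting d (A d)"
  define c :: real where "c = 1 / (12800 * 21504)"
  define Q where "Q = L * Delta / eps"
  define T where "T = nat \<lfloor>Q / 10752\<rfloor>"
  define g where "g = 8 * sqrt eps"
  define p where "p = min 1 (1600 * eps / sigma2)"
  define t where "t = c * Min ((\<lambda>m. (real m / (\<Sum>i=1..m. 1 / tau i)) *
                              (L * Delta / eps + sigma2 * L * Delta / (real m * eps^2))) ` {1..n})"
  define Fs where "Fs = {i \<in> {1..n}. tau i < 2 * t / real T}"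
  define th where "th = max (2 * t / real T) (tau 1)"
  define G where "G = Gh T L g p"
  have taupos: "tau i > 0" if "i \<in> {1..n}" for i
    using sorted t1 that by (metis atLeastAtMost_iff le_refl less_le_trans)
  have Q: "Q \<ge> 10752" using ec e L Dl unfolding Q_def by (simp add: field_simps)
  have fl: "\<lfloor>Q / 10752\<rfloor> \<ge> 1" using Q by simp
  have Treal: "real T = of_int \<lfloor>Q / 10752\<rfloor>" using fl unfolding T_def by simp
  have T1: "T \<ge> 1" using fl unfolding T_def by linarith
  have Tup: "real T \<le> Q / 10752" using Treal by linarith
  have Tlow: "real T \<ge> Q / 21504"
  proof -
    have "of_int \<lfloor>Q / 10752\<rfloor> > Q / 10752 - 1" by linarith
    moreover have "of_int \<lfloor>Q / 10752\<rfloor> \<ge> (1::real)" using fl by simp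
    ultimately show ?thesis using Treal by linarith
  qed
  have g: "g > 0" using e by (simp add: g_def)
  have g2: "g^2 = 64 * eps" using e by (simp add: g_def power_mult_distrib)
  have p0: "0 < p" "p \<le> 1" using e s by (auto simp: p_def)
  interpret I: inst T L g by unfold_locales (use L g in auto)
  have beta: "betaI L g = 2688 * eps / L" using g2 L by (simp add: betaI_def lamI_def power2_eq_square field_simps)
  have FDL: "in_FDL T Delta L (FI T L g) (gI T L g)"
  proof (rule I.inFDL)
    have "2 * (real T + 1) * betaI L g \<le> 4 * real T * betaI L g" using T1 I.beta_pos by (intro mult_right_mono) auto
    also have "\<dots> \<le> 4 * (Q / 10752) * (2688 * eps / L)" unfolding beta using Tup e L by (intro mult_right_mono mult_left_mono) auto
    also have "\<dots> = Delta" using e L by (simp add: Q_def field_simps)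
    finally show "2 * (real T + 1) * betaI L g \<le> Delta" .
  qed
  have Gv: "G x xi \<in> vecd T" if "x \<in> vecd T" for x xi
    using I.in_vecd[of x] by (auto simp: G_def Gh_def vecd_def)
  have Gint: "integral\<^sup>L (Dp p) (\<lambda>xi. G x xi j) = gI T L g x j" for x j
    using p0 by (simp add: Dp_integral G_def Gh_def field_simps)
  have gup: "(gI T L g x k)^2 \<le> 1600 * eps" for x k
  proof -
    have "\<bar>gI T L g x k\<bar>^2 \<le> (5 * g)^2" using I.upper[of x k] by (intro power_mono) auto
    then show ?thesis using g2 by (simp add: power_mult_distrib)
  qed
  have nsq: "(normd T v)^2 = (\<Sum>j<T. (v j)^2)" for v by (rule I.normd_sq)
  have Gvar: "integral\<^sup>L (Dp p) (\<lambda>xi. (normd T (\<lambda>j. G x xi j - gI T L g x j))^2) \<le> sigma2" for x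
  proof -
    let ?g0 = "gI T L g x (progx x)"
    have vv: "(\<Sum>j<T. (G x xi j - gI T L g x j)^2) = (if progx x < T then (G x xi (progx x) - ?g0)^2 else 0)" for xi
    proof -
      have "(\<Sum>j<T. (G x xi j - gI T L g x j)^2) = (\<Sum>j<T. if j = progx x then (G x xi (progx x) - ?g0)^2 else 0)"
        by (rule sum.cong) (auto simp: G_def Gh_def)
      then show ?thesis by (simp add: sum.delta)
    qed
    have "integral\<^sup>L (Dp p) (\<lambda>xi. (normd T (\<lambda>j. G x xi j - gI T L g x j))^2) =
       (if progx x < T then (?g0 / p - ?g0)^2 * p + ?g0^2 * (1 - p) else 0)"
      unfolding nsq vv using p0 by (simp add: Dp_integral G_def Gh_def)
    also have "\<dots> \<le> sigma2"
    proof -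
      have "p = 1 \<or> p = 1600 * eps / sigma2" by (auto simp: p_def min_def)
      then show ?thesis using var_arith[OF p0 gup _ s] s by auto
    qed
    finally show ?thesis .
  qed
  have ADM: "admissible_oracles n T sigma2 (gI T L g) (\<lambda>_. Dp p) G"
    unfolding admissible_oracles_def
  proof (intro conjI allI ballI)
    show "prob_space (Dp p)" for i :: nat by (rule Dp_prob)
    show "G x xi \<in> vecd T" if "x \<in> vecd T" for x xi using that by (rule Gv)
    show "integrable (Dp p) (\<lambda>xi. G x xi j)" for x j by (rule Dp_integrable)
    show "integral\<^sup>L (Dp p) (\<lambda>xi. G x xi j) = gI T L g x j" for x j by (rule Gint)
    show "integrable (Dp p) (\<lambda>xi. (normd T (\<lambda>j. G x xi j - gI T L g x j))^2)" for x by (rule Dp_integrable)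
    show "integral\<^sup>L (Dp p) (\<lambda>xi. (normd T (\<lambda>j. G x xi j - gI T L g x j))^2) \<le> sigma2" for x by (rule Gvar)
  qed
  define V where "V m = (real m / (\<Sum>i=1..m. 1 / tau i)) * (L * Delta / eps + sigma2 * L * Delta / (real m * eps^2))" for m
  have Hpos: "(\<Sum>i=1..m. 1 / tau i) > 0" if "1 \<le> m" "m \<le> n" for m
    using that taupos by (intro sum_pos) auto
  have Vpos: "V m > 0" if "m \<in> {1..n}" for m
    using that Hpos[of m] L Dl e s unfolding V_def by (intro mult_pos_pos divide_pos_pos add_pos_pos) auto
  have tV: "t = c * Min (V ` {1..n})" unfolding t_def V_def by simp
  have c: "c > 0" by (simp add: c_def)
  have t0: "t \<ge> 0"
  proof -
    have "Min (V ` {1..n}) \<in> V ` {1..n}" using n by (intro Min_in) auto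
    then have "Min (V ` {1..n}) > 0" using Vpos by auto
    then show ?thesis unfolding tV using c by simp
  qed
  have thp: "th > 0" using t1 by (simp add: th_def)
  have th: "th > 0" "t / th \<le> real T / 2"
  proof -
    show "th > 0" by (rule thp)
    show "t / th \<le> real T / 2"
    proof (cases "t = 0")
      case True then show ?thesis by simp
    next
      case False
      then have tp: "t > 0" using t0 by simp
      have a1: "2 * t / real T \<le> th" by (simp add: th_def)
      have a2: "0 < 2 * t / real T" using tp T1 by simp
      have a3: "0 < th * (2 * t / real T)" by (rule mult_pos_pos[OF thp a2])
      have "t / th \<le> t / (2 * t / real T)" using divide_left_mono[OF a1 _ a3, of t] tp by simp
      also have "\<dots> = real T / 2" using tp by simp
      finally show ?thesis .
    qed
  qed
  have FsS: "Fs \<subseteq> {1..n}" by (auto simp: Fs_def)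
  have Fsint: "Fs = {1..card Fs}"
  proof (rule down_interval)
    show "finite Fs" using FsS finite_subset by blast
    fix i j assume "i \<in> Fs" "1 \<le> j" "j \<le> i"
    then show "j \<in> Fs" using sorted by (auto simp: Fs_def) (meson order.strict_trans1)
  qed (auto simp: Fs_def)
  have expb: "p * (\<Sum>i\<in>Fs. t / tau i) \<le> real T / 4"
  proof (cases "Fs = {}")
    case True then show ?thesis by simp
  next
    case False
    define m0 where "m0 = card Fs"
    have finFs: "finite Fs" using FsS finite_subset by blast
    have m0: "m0 \<ge> 1" "m0 \<le> n"
    proof -
      show "m0 \<ge> 1" using False finFs unfolding m0_def by (simp add: Suc_le_eq card_gt_0_iff)
      have "card Fs \<le> card {1..n}" by (rule card_mono) (use FsS in auto)
      then show "m0 \<le> n" by (simp add: m0_def)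
    qed
    define H where "H = (\<Sum>i=1..m0. 1 / tau i)"
    have H: "H > 0" using Hpos[OF m0] by (simp add: H_def)
    have sumH: "(\<Sum>i\<in>Fs. t / tau i) = t * H"
    proof -
      have "(\<Sum>i\<in>Fs. t / tau i) = (\<Sum>i\<in>{1..card Fs}. t / tau i)"
        using arg_cong[OF Fsint, of "\<lambda>S. \<Sum>i\<in>S. t / tau i"] .
      then show ?thesis unfolding H_def m0_def by (simp add: sum_distrib_left)
    qed
    have up: "t * H \<le> c * (real m0 * Q + sigma2 * Q / eps)"
    proof -
      have "Min (V ` {1..n}) \<le> V m0" using m0 by (intro Min_le) auto
      then have "t * H \<le> c * V m0 * H" unfolding tV using c H by (intro mult_right_mono mult_left_mono) auto
      also have "c * V m0 * H = c * (real m0 * Q + sigma2 * Q / eps)"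
        using H m0 e unfolding V_def H_def Q_def by (simp add: field_simps power2_eq_square)
      finally show ?thesis .
    qed
    have low: "real m0 * real T / 2 \<le> t * H"
    proof -
      have "(\<Sum>i\<in>Fs. real T / 2) \<le> (\<Sum>i\<in>Fs. t / tau i)"
      proof (rule sum_mono)
        fix i assume i: "i \<in> Fs"
        then have ti: "tau i > 0" "tau i < 2 * t / real T" using taupos by (auto simp: Fs_def)
        then have "real T * tau i < 2 * t" using T1 by (simp add: field_simps)
        then show "real T / 2 \<le> t / tau i" using ti by (simp add: field_simps)
      qed
      then show ?thesis using sumH by (simp add: m0_def)
    qed
    have pb: "p \<le> 1600 * eps / sigma2" by (simp add: p_def)
    have "p * (t * H) \<le> real T / 4"
      by (rule arith_main[OF _ e s c_def Tlow _ up low _ pb]) (use Q p0 in auto)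
    then show ?thesis using sumH by simp
  qed
  have Gbin: "G x xi = G x xi'" if "(xi = 1 \<longleftrightarrow> xi' = 1)" for x xi xi'
    using that by (auto simp: G_def Gh_def fun_eq_iff)
  have G1: "sup_lt (G x xi) (Suc P)" if "x \<in> vecd T" "sup_lt x P" for x P xi
  proof -
    have pp: "progx x \<le> P" using progx_le[OF that(2)] .
    show ?thesis unfolding sup_lt_def
    proof (intro allI impI)
      fix j assume j: "Suc P \<le> j"
      then have "j \<noteq> progx x" using pp by auto
      moreover have "gI T L g x j = 0" using j that(2) by (intro I.zchain[of P]) (auto simp: sup_lt_def)
      ultimately show "G x xi j = 0" by (simp add: G_def Gh_def)
    qed
  qed
  have G2: "sup_lt (G x xi) P" if "x \<in> vecd T" "sup_lt x P" "xi \<noteq> 1" for x P xi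
  proof -
    have pp: "progx x \<le> P" using progx_le[OF that(2)] .
    have sp: "sup_lt x (progx x)" using progx[OF that(1)] by simp
    show ?thesis unfolding sup_lt_def
    proof (intro allI impI)
      fix j assume j: "P \<le> j"
      show "G x xi j = 0"
      proof (cases "j = progx x")
        case True then show ?thesis using that(3) by (simp add: G_def Gh_def)
      next
        case False
        then have "j \<ge> Suc (progx x)" using j pp by auto
        then have "gI T L g x j = 0" using sp by (intro I.zchain[of "progx x"]) (auto simp: sup_lt_def)
        then show ?thesis using False by (simp add: G_def Gh_def)
      qed
    qed
  qed
  have slow: "tau i \<ge> th" if "i \<in> {1..n}" "i \<notin> Fs" for i
    using that sorted by (auto simp: Fs_def th_def)
  have hard: "4 * eps \<le> (normd T (gI T L g x))^2" if "x \<in> vecd T" "x (T - 1) = 0" for x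
  proof -
    have "(g / 4)^2 \<le> (normd T (gI T L g x))^2" using I.lower[of x] that T1 by simp
    moreover have "(g / 4)^2 = 4 * eps" using g2 by (simp add: power_divide)
    ultimately show ?thesis by simp
  qed
  interpret P: pp n T "A T" tau G Fs th p t T "gI T L g" "4 * eps"
  proof (intro pp.intro proto_level.intro proto.intro proto_level_axioms.intro pp_axioms.intro)
    show "is_algorithm n T (A T)" "zero_respecting T (A T)" using alg by auto
    show "\<And>x xi. x \<in> vecd T \<Longrightarrow> G x xi \<in> vecd T" by (rule Gv)
    show "\<And>i. i \<in> {1..n} \<Longrightarrow> i \<notin> Fs \<Longrightarrow> th \<le> tau i" by (rule slow)
    show "\<And>x P xi. x \<in> vecd T \<Longrightarrow> sup_lt x P \<Longrightarrow> sup_lt (G x xi) (Suc P)" by (rule G1)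
    show "\<And>x P xi. x \<in> vecd T \<Longrightarrow> sup_lt x P \<Longrightarrow> xi \<noteq> 1 \<Longrightarrow> sup_lt (G x xi) P" by (rule G2)
    show "\<And>x xi xi'. (xi = 1) = (xi' = 1) \<Longrightarrow> G x xi = G x xi'" by (rule Gbin)
    show "\<And>i. i \<in> {1..n} \<Longrightarrow> 0 < tau i" by (rule taupos)
    show "Fs \<subseteq> {1..n}" by (rule FsS)
    show "0 \<le> p" "p \<le> 1" using p0 by auto
    show "0 \<le> t" by (rule t0)
    show "0 < th" "t / th \<le> real T / 2" by (rule th(1), rule th(2))
    show "p * (\<Sum>i\<in>Fs. t / tau i) \<le> real T / 4" by (rule expb)
    show "0 < T" using T1 by simp
    show "\<And>x. x \<in> vecd T \<Longrightarrow> x (T - 1) = 0 \<Longrightarrow> 4 * eps \<le> (normd T (gI T L g x))\<^sup>2" by (rule hard)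
    show "0 \<le> 4 * eps" using e by simp
  qed
  have "P.hI = (\<lambda>\<omega>. INF k\<in>S_set (A T) tau G \<omega> t. (normd T (gI T L g (proto_point (A T) tau G \<omega> k)))^2)"
    by (simp add: P.hI_def P.fk_def fun_eq_iff)
  moreover have "integral\<^sup>L (SM p) P.hI \<ge> 4 * eps / 2" by (rule P.main_prob)
  ultimately have main: "(\<integral>\<omega>. (INF k\<in>S_set (A T) tau G \<omega> t. (normd T (gI T L g (proto_point (A T) tau G \<omega> k)))^2)
      \<partial>sample_measure (\<lambda>_. Dp p)) > eps"
    using e by (simp add: sample_measure_eq)
  show "\<exists>(d::nat) (f::vecn \<Rightarrow> real) (gf::vecn \<Rightarrow> vecn) (D::nat \<Rightarrow> real measure) (G::vecn \<Rightarrow> real \<Rightarrow> vecn).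
        in_FDL d Delta L f gf \<and> admissible_oracles n d sigma2 gf D G \<and>
        (let t = 1 / (12800 * 21504) * Min ((\<lambda>m. (real m / (\<Sum>i=1..m. 1 / tau i)) *
                              (L * Delta / eps + sigma2 * L * Delta / (real m * eps^2))) ` {1..n})
         in (\<integral>\<omega>. (INF k\<in>S_set (A d) tau G \<omega> t. (normd d (gf (proto_point (A d) tau G \<omega> k)))^2)
               \<partial>sample_measure D) > eps)"
    using FDL ADM main unfolding Let_def t_def c_def by blast
qed



end
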